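(* Let $H_\alpha(k)$, $k\in\mathbb T^d$, be the fiber magnetic Schrödinger operator, and let $k_o$ and $\mathcal P$ be as in the context. Then for each $n\in\mathbb N$ and $k\in\mathbb T^d$: $$\operatorname{Tr}\big(H_0^n(k)-H_\alpha^n(k+k_o)\big)=\sum_{\mathbf c\in\widetilde{\mathcal C}_n}\omega(\mathbf c)\mathcal S(\mathbf c,k),\qquad \mathcal S(\mathbf c,k)=2\sin\frac{\alpha(\mathcal P\mathbf c)}2\sin\Big(\frac{\alpha(\mathcal P\mathbf c)}2+\langle\tau(\mathbf c),k\rangle\Big);$$ $$\operatorname{Tr}\big(H_0^n(k)-H_\alpha^n(k+k_o)\big)=\sum_{\mathrm m\in\mathbb Z^d,\|\mathrm m\|\le n\tau_+}\mathfrak t_{\alpha,n,\mathrm m}e^{-i\langle\mathrm m,k\rangle},\qquad \mathfrak t_{\alpha,n,\mathrm m}=\sum_{\mathbf c\in\widetilde{\mathcal C}_n^{\mathrm m}}\omega(\mathbf c)\big(1-e^{-i\alpha(\mathcal P\mathbf c)}\big);$$ $$\frac1{(2\pi)^d}\int_{\mathbb T^d}\operatorname{Tr}\big(H_0^n(k)-H_\alpha^n(k)\big)dk=\mathfrak t_{\alpha,n,0}=2\sum_{\mathbf c\in\widetilde{\mathcal C}_n^0}\omega(\mathbf c)\sin^2\frac{\alpha(\mathbf c)}2.$$ In particular, $$\operatorname{Tr}\big(H_0(k)-H_\alpha(k+k_o)\big)=\sum_{\mathbf c\in\mathcal C_1}\mathcal S(\mathbf c,k),\qquad \operatorname{Tr}\big(H_0^2(k)-H_\alpha^2(k+k_o)\big)=2\sum_{\mathbf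 c\in\mathcal C_1}v_{x_{\mathbf c}}\mathcal S(\mathbf c,k)+\sum_{\mathbf c\in\mathcal C_2}\mathcal S(\mathbf c,k),$$ $$\frac1{(2\pi)^d}\int_{\mathbb T^d}\operatorname{Tr}\big(H_0(k)-H_\alpha(k)\big)dk=2\sum_{\mathbf c\in\mathcal C_1^0}\sin^2\frac{\alpha(\mathbf c)}2\ge0,$$ $$\frac1{(2\pi)^d}\int_{\mathbb T^d}\operatorname{Tr}\big(H_0^2(k)-H_\alpha^2(k)\big)dk=4\sum_{\mathbf c\in\mathcal C_1^0}v_{x_{\mathbf c}}\sin^2\frac{\alpha(\mathbf c)}2+2\sum_{\mathbf c\in\mathcal C_2^0}\sin^2\frac{\alpha(\mathbf c)}2,$$ where $x_{\mathbf c}$ is the unique vertex of $\mathbf c\in\mathcal C_1$ and $v_x=V_x-\varkappa_x$.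
   Context: Let $\Gamma\subset\mathbb R^d$ be a lattice with basis $\mathfrak a_1,\dots,\mathfrak a_d$ and fundamental cell $\Omega=\{\sum_sx_s\mathfrak a_s:(x_s)\in[0,1)^d\}$. Let $\mathcal G=(\mathcal V,\mathcal E)$ be a connected, locally finite, infinite graph embedded in $\mathbb R^d$ (loops, multiple edges allowed), invariant under $\Gamma$-translations, with finite quotient $\mathcal G_*=(\mathcal V_*,\mathcal E_* )$; $\nu=\#\mathcal V_*$; $\beta=\#\mathcal E_*-\#\mathcal V_*+1$. Oriented edges $\mathcal A_*$; $\underline{\mathbf e}$ inverse; $\varkappa_x$ = number of oriented edges starting at $x$. Edge index: $x=x_0+[x]$, $x_0\in\mathcal V\cap\Omega$, $[x]\in\Gamma$ with coordinates $[x]_{\mathbb A}\in\mathbb Z^d$; $\tau((x,y))=[y]_{\mathbb A}-[x]_{\mathbb A}$, defined on $\mathcal A_*$; $\tau_+=\max_{\mathcal A_*}\|\tau(\mathbf e)\|$. Periodic magnetic potential $\alpha$ on oriented edges ($\alpha(\underline{\mathbf e})=-\alpha(\mathbf e)$, $\Gamma$-invariant); $V$ real $\Gamma$-periodic. Fiber operator for $k\in\mathbb T^d=\mathbb R^d/(2\pi\mathbb Z)^d$: $H_\alpha(k)=A_\alpha(k)-\varkappa+V$ on $\mathbb C^\nu$, $(A_\alpha(k)f)_x=\sum_{\mathbf e=(x,y)\in\mathcal A_*}e^{i(\alpha(\mathbf e)+\langle\tau(\mathbf e),k\rangle)}f_y$; $H_0(k)$ is the case $\alpha=0$. Cycles: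 ordered sequences of oriented edges $(\mathbf e_1,\dots,\mathbf e_n)$, $\mathbf e_s=(x_{s-1},x_s)$, $x_n=x_0$ (cyclic shifts distinct; backtracking allowed); index $\tau(\mathbf c)=\sum\tau(\mathbf e)$, flux $\alpha(\mathbf c)=(\sum\alpha(\mathbf e))\bmod2\pi$, both additive on the integer cycle space. $\mathcal C_n$, $\mathcal C_n^0$: cycles of $\mathcal G_*$ of length $n$ (with zero index). Modified graph $\widetilde{\mathcal G}_*$: add at each $x$ one oriented loop $\mathbf e_x$ (single oriented edge) with $\tau=0$, $\alpha=0$; $\omega(\mathbf e)=1$ on $\mathcal A_*$, $\omega(\mathbf e_x)=v_x$, $\omega(\mathbf c)=\prod\omega(\mathbf e_s)$; $\widetilde{\mathcal C}$ its cycle space, $\widetilde{\mathcal C}_n,\widetilde{\mathcal C}_n^{\mathrm m}$ its cycles of length $n$ (and index $\mathrm m$). Fix a basis $\mathbf c_1,\dots,\mathbf c_\beta$ of the integer cycle space of $\mathcal G_*$ with $\tau(\mathbf c_1),\dots,\tau(\mathbf c_d)$ the standard basis of $\mathbb Z^d$ and $\mathbf c_{d+1},\dots,\mathbf c_\beta$ a basis of the zero-index cycles $\mathcal C^0$; then $\{\mathbf c_s\}\cup\{\mathbf e_x\}$ is a basis of $\widetilde{\mathcal C}$, each $\mathbf c\in\widetilde{\mathcal C}$ is uniquely $\sum_s n_s(\mathbf c)\mathbf c_s+\sum_x n_x(\mathbf c)\mathbf e_x$ ($n_s,n_x\in\mathbb Z$), and $\mathcal P\mathbf c=\sum_{s=d+1}^\beta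 n_s(\mathbf c)\mathbf c_s$. Set $k_o=-(\alpha(\mathbf c_1),\dots,\alpha(\mathbf c_d))$. *)

theory Defs
  imports "HOL-Analysis.Analysis"
begin

primrec mpow :: "'a::semiring_1^'n^'n \<Rightarrow> nat \<Rightarrow> 'a^'n^'n" where
  "mpow A 0 = mat 1"
| "mpow A (Suc n) = A ** mpow A n"

(* ---------- the quotient graph G_* ----------
   vertices: finite type 'v (V_* ), oriented edges: finite type 'e (A_* ),
   src/tgt: start/end vertex, rv: the inverse oriented edge,
   tau: the edge index in Z^d (d = CARD('d)), al: magnetic potential. *)

definition periodic_graph ::
  "('e::finite \<Rightarrow> 'v::finite) \<Rightarrow> ('e \<Rightarrow> 'v) \<Rightarrow> ('e \<Rightarrow> 'e) \<Rightarrow> ('e \<Rightarrow> int^'d::finite) \<Rightarrow> ('e \<Rightarrow> real) \<Rightarrow> bool" where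
  "periodic_graph src tgt rv tau al \<longleftrightarrow>
     (\<forall>e. rv (rv e) = e \<and> rv e \<noteq> e \<and> src (rv e) = tgt e \<and> tgt (rv e) = src e
          \<and> tau (rv e) = - tau e \<and> al (rv e) = - al e)
     \<and> (\<forall>x y. (x, y) \<in> {(src e, tgt e) | e. True}\<^sup>*)"

definition kappa :: "('e::finite \<Rightarrow> 'v) \<Rightarrow> 'v \<Rightarrow> nat" where
  "kappa src x = card {e. src e = x}"

definition ip :: "int^'d::finite \<Rightarrow> real^'d \<Rightarrow> real" where
  "ip m k = (\<Sum>i\<in>UNIV. of_int (m $ i) * k $ i)"

definition realvec :: "int^'d::finite \<Rightarrow> real^'d" where
  "realvec m = (\<chi> i. of_int (m $ i))"

definition fiberH ::
  "('e::finite \<Rightarrow> 'v::finite) \<Rightarrow> ('e \<Rightarrow> 'v) \<Rightarrow> ('e \<Rightarrow> int^'d::finite) \<Rightarrow> ('e \<Rightarrow> real)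
   \<Rightarrow> ('v \<Rightarrow> real) \<Rightarrow> real^'d \<Rightarrow> complex^'v^'v" where
  "fiberH src tgt tau al V k = (\<chi> x y.
      (\<Sum>e\<in>{e. src e = x \<and> tgt e = y}. exp (\<i> * complex_of_real (al e + ip (tau e) k)))
      + (if x = y then complex_of_real (V x - real (kappa src x)) else 0))"

(* ---------- cycles ----------
   a cycle of length n: a list of n oriented edges, each ending where the next
   (cyclically) starts.  Lists are ordered, so cyclic shifts are distinct. *)

definition is_cycle :: "('a \<Rightarrow> 'v) \<Rightarrow> ('a \<Rightarrow> 'v) \<Rightarrow> 'a list \<Rightarrow> bool" where
  "is_cycle src tgt c \<longleftrightarrow> c \<noteq> [] \<and>
     (\<forall>i < length c. tgt (c ! i) = src (c ! ((i + 1) mod length c)))"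

definition cycles :: "('a \<Rightarrow> 'v) \<Rightarrow> ('a \<Rightarrow> 'v) \<Rightarrow> nat \<Rightarrow> 'a list set" where
  "cycles src tgt n = {c. length c = n \<and> is_cycle src tgt c}"

definition cyc_tau :: "('a \<Rightarrow> int^'d::finite) \<Rightarrow> 'a list \<Rightarrow> int^'d" where
  "cyc_tau tau c = sum_list (map tau c)"

definition cyc_al :: "('a \<Rightarrow> real) \<Rightarrow> 'a list \<Rightarrow> real" where
  "cyc_al al c = sum_list (map al c)"

(* modified graph: oriented edges 'e + 'v, Inr x is the added loop e_x at x *)
definition msrc :: "('e \<Rightarrow> 'v) \<Rightarrow> 'e + 'v \<Rightarrow> 'v" where
  "msrc src a = (case a of Inl e \<Rightarrow> src e | Inr x \<Rightarrow> x)"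

definition mtgt :: "('e \<Rightarrow> 'v) \<Rightarrow> 'e + 'v \<Rightarrow> 'v" where
  "mtgt tgt a = (case a of Inl e \<Rightarrow> tgt e | Inr x \<Rightarrow> x)"

definition mtau :: "('e \<Rightarrow> int^'d::finite) \<Rightarrow> 'e + 'v \<Rightarrow> int^'d" where
  "mtau tau a = (case a of Inl e \<Rightarrow> tau e | Inr x \<Rightarrow> 0)"

definition mal :: "('e \<Rightarrow> real) \<Rightarrow> 'e + 'v \<Rightarrow> real" where
  "mal al a = (case a of Inl e \<Rightarrow> al e | Inr x \<Rightarrow> 0)"

definition vpot :: "('e::finite \<Rightarrow> 'v) \<Rightarrow> ('v \<Rightarrow> real) \<Rightarrow> 'v \<Rightarrow> real" where
  "vpot src V x = V x - real (kappa src x)"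

definition omega :: "('e::finite \<Rightarrow> 'v) \<Rightarrow> ('v \<Rightarrow> real) \<Rightarrow> ('e + 'v) list \<Rightarrow> real" where
  "omega src V c = prod_list (map (\<lambda>a. case a of Inl e \<Rightarrow> 1 | Inr x \<Rightarrow> vpot src V x) c)"

(* ---------- integer cycle space of G_* ----------
   integer 1-chains are represented as antisymmetric functions f : A_* -> Z
   (f (rv e) = - f e); the cycle space is the kernel of the boundary map. *)

definition cycle_space :: "('e::finite \<Rightarrow> 'v) \<Rightarrow> ('e \<Rightarrow> 'e) \<Rightarrow> ('e \<Rightarrow> int) set" where
  "cycle_space src rv = {f. (\<forall>e. f (rv e) = - f e) \<and> (\<forall>x. (\<Sum>e\<in>{e. src e = x}. f e) = 0)}"

(* chain of a cycle of the modified graph (its G_*-part; the loops e_x are the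
   remaining basis vectors of the cycle space of the modified graph) *)
definition chain_of :: "('e \<Rightarrow> 'e) \<Rightarrow> ('e + 'v) list \<Rightarrow> 'e \<Rightarrow> int" where
  "chain_of rv c e = int (count_list c (Inl e)) - int (count_list c (Inl (rv e)))"

(* index and flux of a chain; each unoriented edge appears twice in the sum
   (once per orientation, with equal contributions), hence the factor 1/2 *)
definition ch_tau :: "('e::finite \<Rightarrow> int^'d::finite) \<Rightarrow> ('e \<Rightarrow> int) \<Rightarrow> int^'d" where
  "ch_tau tau f = (\<chi> i. (\<Sum>e\<in>UNIV. f e * tau e $ i) div 2)"

definition ch_al :: "('e::finite \<Rightarrow> real) \<Rightarrow> ('e \<Rightarrow> int) \<Rightarrow> real" where
  "ch_al al f = (\<Sum>e\<in>UNIV. of_int (f e) * al e) / 2"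

(* beta = #E_* - #V_* + 1 ; #E_* = (number of oriented edges)/2 *)
definition betti :: "'e::finite itself \<Rightarrow> 'v::finite itself \<Rightarrow> nat" where
  "betti TYPE('e) TYPE('v) = CARD('e) div 2 + 1 - CARD('v)"

(* the basis: blat i (i in 'd, i.e. c_1..c_d) and bzero j (j < beta - d, i.e. c_{d+1}..c_beta) *)
definition cycle_basis ::
  "('e::finite \<Rightarrow> 'v::finite) \<Rightarrow> ('e \<Rightarrow> 'e) \<Rightarrow> ('e \<Rightarrow> int^'d::finite) \<Rightarrow> nat
   \<Rightarrow> ('d \<Rightarrow> 'e \<Rightarrow> int) \<Rightarrow> (nat \<Rightarrow> 'e \<Rightarrow> int) \<Rightarrow> bool" where
  "cycle_basis src rv tau m blat bzero \<longleftrightarrow>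
     (\<forall>i. blat i \<in> cycle_space src rv \<and> ch_tau tau (blat i) = axis i 1)
     \<and> (\<forall>j<m. bzero j \<in> cycle_space src rv \<and> ch_tau tau (bzero j) = 0)
     \<and> (\<forall>f\<in>cycle_space src rv. \<exists>!ab :: ('d \<Rightarrow> int) \<times> (nat \<Rightarrow> int).
           (\<forall>j\<ge>m. snd ab j = 0) \<and>
           f = (\<lambda>e. (\<Sum>i\<in>UNIV. fst ab i * blat i e) + (\<Sum>j<m. snd ab j * bzero j e)))"

definition zero_coeffs ::
  "nat \<Rightarrow> ('d::finite \<Rightarrow> 'e \<Rightarrow> int) \<Rightarrow> (nat \<Rightarrow> 'e \<Rightarrow> int) \<Rightarrow> ('e \<Rightarrow> int) \<Rightarrow> nat \<Rightarrow> int" where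
  "zero_coeffs m blat bzero f = snd (THE ab :: ('d \<Rightarrow> int) \<times> (nat \<Rightarrow> int).
           (\<forall>j\<ge>m. snd ab j = 0) \<and>
           f = (\<lambda>e. (\<Sum>i\<in>UNIV. fst ab i * blat i e) + (\<Sum>j<m. snd ab j * bzero j e)))"

definition alP ::
  "('e \<Rightarrow> 'e) \<Rightarrow> ('e::finite \<Rightarrow> real) \<Rightarrow> nat \<Rightarrow> ('d::finite \<Rightarrow> 'e \<Rightarrow> int) \<Rightarrow> (nat \<Rightarrow> 'e \<Rightarrow> int)
   \<Rightarrow> ('e + 'v) list \<Rightarrow> real" where
  "alP rv al m blat bzero c =
     (\<Sum>j<m. of_int (zero_coeffs m blat bzero (chain_of rv c) j) * ch_al al (bzero j))"

definition k_o :: "('e::finite \<Rightarrow> real) \<Rightarrow> ('d::finite \<Rightarrow> 'e \<Rightarrow> int) \<Rightarrow> real^'d" where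
  "k_o al blat = (\<chi> i. - ch_al al (blat i))"

definition S_fun ::
  "('e \<Rightarrow> 'e) \<Rightarrow> ('e::finite \<Rightarrow> real) \<Rightarrow> ('e \<Rightarrow> int^'d::finite) \<Rightarrow> nat \<Rightarrow> ('d \<Rightarrow> 'e \<Rightarrow> int)
   \<Rightarrow> (nat \<Rightarrow> 'e \<Rightarrow> int) \<Rightarrow> ('e + 'v) list \<Rightarrow> real^'d \<Rightarrow> real" where
  "S_fun rv al tau m blat bzero c k =
     (let a = alP rv al m blat bzero c in 2 * sin (a / 2) * sin (a / 2 + ip (cyc_tau (mtau tau) c) k))"

definition t_coef ::
  "('e::finite \<Rightarrow> 'v::finite) \<Rightarrow> ('e \<Rightarrow> 'v) \<Rightarrow> ('e \<Rightarrow> 'e) \<Rightarrow> ('e \<Rightarrow> real) \<Rightarrow> ('e \<Rightarrow> int^'d::finite)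
   \<Rightarrow> ('v \<Rightarrow> real) \<Rightarrow> nat \<Rightarrow> ('d \<Rightarrow> 'e \<Rightarrow> int) \<Rightarrow> (nat \<Rightarrow> 'e \<Rightarrow> int) \<Rightarrow> nat \<Rightarrow> int^'d \<Rightarrow> complex" where
  "t_coef src tgt rv al tau V m blat bzero n mm =
     (\<Sum>c\<in>{c\<in>cycles (msrc src) (mtgt tgt) n. cyc_tau (mtau tau) c = mm}.
        complex_of_real (omega src V c) * (1 - exp (- \<i> * complex_of_real (alP rv al m blat bzero c))))"

definition tau_plus :: "('e::finite \<Rightarrow> int^'d::finite) \<Rightarrow> real" where
  "tau_plus tau = Max (range (\<lambda>e. norm (realvec (tau e))))"

definition torus :: "(real^'d::finite) set" where
  "torus = cbox 0 (\<chi> i. 2 * pi)"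

end

theory Submission
  imports Defs
begin



fun walk :: "('a \<Rightarrow> 'v) \<Rightarrow> ('a \<Rightarrow> 'v) \<Rightarrow> 'v \<Rightarrow> 'a list \<Rightarrow> 'v \<Rightarrow> bool" where
  "walk s t x [] y = (x = y)"
| "walk s t x (a # c) y = (s a = x \<and> walk s t (t a) c y)"

definition wmat :: "('a::finite \<Rightarrow> 'v::finite) \<Rightarrow> ('a \<Rightarrow> 'v) \<Rightarrow> ('a \<Rightarrow> 'b::comm_semiring_1) \<Rightarrow> 'b^'v^'v" where
  "wmat s t w = (\<chi> x y. \<Sum>a\<in>{a. s a = x \<and> t a = y}. w a)"

lemma finite_len: "finite {c :: ('a::finite) list. length c = n \<and> P c}"
  by (rule finite_subset[OF _ finite_lists_length_eq[of "UNIV::'a set" n]]) auto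

lemma walks_Suc: "{c. length c = Suc n \<and> walk s t x c y} =
   (\<lambda>(a, c). a # c) ` (SIGMA a:{a. s a = x}. {c. length c = n \<and> walk s t (t a) c y})"
  by (auto simp: length_Suc_conv image_iff)

lemma mpow_wmat:
  fixes s t :: "'a::finite \<Rightarrow> 'v::finite" and w :: "'a \<Rightarrow> 'b::comm_semiring_1"
  shows "mpow (wmat s t w) n $ x $ y = (\<Sum>c\<in>{c. length c = n \<and> walk s t x c y}. prod_list (map w c))"
proof (induction n arbitrary: x y)
  case 0
  have "{c. length c = 0 \<and> walk s t x c y} = (if x = y then {[]} else {})" by auto
  then show ?case by (simp add: mat_def)
next
  case (Suc n)
  have "mpow (wmat s t w) (Suc n) $ x $ y = (\<Sum>z\<in>UNIV. (\<Sum>a\<in>{a. s a = x \<and> t a = z}. w a) *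
       (\<Sum>c\<in>{c. length c = n \<and> walk s t z c y}. prod_list (map w c)))"
    by (simp add: matrix_matrix_mult_def Suc) (simp add: wmat_def)
  also have "\<dots> = (\<Sum>z\<in>UNIV. \<Sum>a\<in>{a. s a = x \<and> t a = z}.
       (\<Sum>c\<in>{c. length c = n \<and> walk s t (t a) c y}. w a * prod_list (map w c)))"
    unfolding sum_product by (intro sum.cong refl) simp
  also have "\<dots> = (\<Sum>a\<in>{a. s a = x}.
       (\<Sum>c\<in>{c. length c = n \<and> walk s t (t a) c y}. w a * prod_list (map w c)))"
    using sum.group[of "{a. s a = x}" UNIV t "\<lambda>a. \<Sum>c\<in>{c. length c = n \<and> walk s t (t a) c y}. w a * prod_list (map w c)"] by simp
  also have "\<dots> = (\<Sum>p\<in>(SIGMA a:{a. s a = x}. {c. length c = n \<and> walk s t (t a) c y}).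
        (case p of (a, c) \<Rightarrow> w a * prod_list (map w c)))"
    by (subst sum.Sigma) (auto intro: finite_len)
  also have "\<dots> = (\<Sum>c\<in>{c. length c = Suc n \<and> walk s t x c y}. prod_list (map w c))"
    unfolding walks_Suc by (subst sum.reindex) (auto simp: inj_on_def intro!: sum.cong split: prod.splits)
  finally show ?case .
qed


lemma all_Suc_split: "(\<forall>i. P i) \<longleftrightarrow> P 0 \<and> (\<forall>i. P (Suc i))"
  by (metis not0_implies_Suc)

lemma walk_iff: "walk s t x c y \<longleftrightarrow> (if c = [] then x = y else s (hd c) = x \<and>
   (\<forall>i. Suc i < length c \<longrightarrow> t (c ! i) = s (c ! Suc i)) \<and> t (last c) = y)"
proof (induction c arbitrary: x)
  case Nil then show ?case by simp
next
  case (Cons a c)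
  show ?case
  proof (cases c)
    case Nil then show ?thesis by auto
  next
    case (Cons b d)
    have e: "(\<forall>i. Suc i < length (a # c) \<longrightarrow> t ((a # c) ! i) = s ((a # c) ! Suc i)) \<longleftrightarrow>
       t a = s (hd c) \<and> (\<forall>i. Suc i < length c \<longrightarrow> t (c ! i) = s (c ! Suc i))"
      apply (subst all_Suc_split) using Cons by simp
    show ?thesis unfolding walk.simps Cons.IH e using Cons by auto
  qed
qed

lemma is_cycle_walk: "is_cycle s t c \<longleftrightarrow> c \<noteq> [] \<and> walk s t (s (hd c)) c (s (hd c))"
proof (cases "c = []")
  case True then show ?thesis by (simp add: is_cycle_def)
next
  case False
  have L: "last c = c ! (length c - 1)" using False by (simp add: last_conv_nth)
  have H: "hd c = c ! 0" using False by (simp add: hd_conv_nth)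
  have "(\<forall>i<length c. t (c ! i) = s (c ! ((i + 1) mod length c))) \<longleftrightarrow>
     (\<forall>i. Suc i < length c \<longrightarrow> t (c ! i) = s (c ! Suc i)) \<and> t (c ! (length c - 1)) = s (c ! 0)"
  proof safe
    fix i assume "\<forall>i<length c. t (c ! i) = s (c ! ((i + 1) mod length c))" "Suc i < length c"
    then show "t (c ! i) = s (c ! Suc i)" by (metis Suc_eq_plus1 Suc_lessD mod_less)
  next
    assume "\<forall>i<length c. t (c ! i) = s (c ! ((i + 1) mod length c))"
    moreover have "length c - 1 < length c" "(length c - 1 + 1) mod length c = 0" using False by auto
    ultimately show "t (c ! (length c - 1)) = s (c ! 0)" by metis
  next
    fix i assume "\<forall>i. Suc i < length c \<longrightarrow> t (c ! i) = s (c ! Suc i)" "t (c ! (length c - 1)) = s (c ! 0)"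
      "i < length c"
    then show "t (c ! i) = s (c ! ((i + 1) mod length c))"
    proof (cases "Suc i < length c")
      case True then show ?thesis using \<open>\<forall>i. Suc i < length c \<longrightarrow> _\<close> by simp
    next
      case F: False
      then have "Suc i = length c" using \<open>i < length c\<close> by simp
      then have "i = length c - 1" "(i + 1) mod length c = 0" by auto
      then show ?thesis using \<open>t (c ! (length c - 1)) = s (c ! 0)\<close> by simp
    qed
  qed
  then show ?thesis unfolding is_cycle_def walk_iff L H using False by simp
qed
lemma trace_wmat:
  fixes s t :: "'a::finite \<Rightarrow> 'v::finite" and w :: "'a \<Rightarrow> 'b::comm_semiring_1"
  assumes "n \<ge> 1"
  shows "trace (mpow (wmat s t w) n) = (\<Sum>c\<in>cycles s t n. prod_list (map w c))"
proof -
  have "trace (mpow (wmat s t w) n) = (\<Sum>x\<in>UNIV. \<Sum>c\<in>{c. length c = n \<and> walk s t x c x}. prod_list (map w c))"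
    by (simp add: trace_def mpow_wmat)
  also have "\<dots> = (\<Sum>x\<in>UNIV. \<Sum>c\<in>{c\<in>cycles s t n. s (hd c) = x}. prod_list (map w c))"
    using assms by (intro sum.cong refl arg_cong[where f = "sum _"])
      (auto simp: cycles_def is_cycle_walk walk_iff)
  also have "\<dots> = (\<Sum>c\<in>cycles s t n. prod_list (map w c))"
    by (rule sum.group) (auto simp: cycles_def intro: finite_len)
  finally show ?thesis .
qed



interpretation pl: product_sigma_finite "\<lambda>_::'a. (lborel :: real measure)"
  by unfold_locales

lemma integral_lborel_prod:
  fixes f :: "'a::euclidean_space \<Rightarrow> real \<Rightarrow> complex"
  assumes int: "\<And>b. b \<in> Basis \<Longrightarrow> integrable lborel (f b)"
  shows "(\<integral>x. (\<Prod>b\<in>Basis. f b (x \<bullet> b)) \<partial>(lborel :: 'a measure)) = (\<Prod>b\<in>Basis. (\<integral>x. f b x \<partial>lborel))"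
proof -
  have m: "(\<lambda>x::'a. \<Prod>b\<in>Basis. f b (x \<bullet> b)) \<in> borel_measurable borel"
    using int by measurable
  have T: "(\<lambda>g. \<Sum>b\<in>Basis. g b *\<^sub>R b) \<in> measurable (\<Pi>\<^sub>M b\<in>Basis. lborel) (borel :: 'a measure)"
    by measurable
  have "(\<integral>x. (\<Prod>b\<in>Basis. f b (x \<bullet> b)) \<partial>(lborel :: 'a measure)) =
     (\<integral>g. (\<Prod>b\<in>Basis. f b ((\<Sum>b'\<in>Basis. g b' *\<^sub>R b') \<bullet> b)) \<partial>(\<Pi>\<^sub>M b\<in>Basis. lborel))"
    by (subst lborel_eq) (rule integral_distr[OF T m])
  also have "\<dots> = (\<integral>g. (\<Prod>b\<in>Basis. f b (g b)) \<partial>(\<Pi>\<^sub>M b\<in>Basis. lborel))"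
    by (intro Bochner_Integration.integral_cong refl prod.cong) (simp add: inner_sum_left inner_Basis if_distrib sum.delta cong: if_cong)
  also have "\<dots> = (\<Prod>b\<in>Basis. (\<integral>x. f b x \<partial>lborel))"
    by (rule pl.product_integral_prod) (auto intro: int)
  finally show ?thesis .
qed

lemma ip_inner: "ip m q = realvec m \<bullet> q"
  by (simp add: ip_def realvec_def inner_vec_def)

lemma torus_exp_integral:
  fixes m :: "int^'d::finite"
  shows "integral (torus :: (real^'d) set) (\<lambda>q. exp (\<i> * complex_of_real (ip m q)))
     = (if m = 0 then complex_of_real ((2*pi)^CARD('d)) else 0)"
proof (cases "m = 0")
  case True
  have "Henstock_Kurzweil_Integration.content (torus :: (real^'d) set) = (2*pi)^CARD('d)"
  proof -
    have "(0::real^'d) \<in> torus" by (simp add: torus_def mem_box_cart)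
    then show ?thesis unfolding torus_def by (subst content_cbox_cart) auto
  qed
  moreover have "integral torus (\<lambda>q::real^'d. 1::complex) = Henstock_Kurzweil_Integration.content (torus :: (real^'d) set) *\<^sub>R 1"
    unfolding torus_def by (rule integral_const)
  ultimately show ?thesis using True by (simp add: ip_def scaleR_conv_of_real)
next
  case False
  then obtain i where i: "m $ i \<noteq> 0" by (auto simp: vec_eq_iff)
  define F where "F = (\<lambda>q::real^'d. exp (\<i> * complex_of_real (ip m q)))"
  define g where "g = (\<lambda>b y. indicator {0..2*pi} y *\<^sub>R exp (\<i> * complex_of_real ((realvec m \<bullet> b) * y)))"
  have cF: "continuous_on UNIV F" unfolding F_def ip_def by (intro continuous_intros)
  have "set_integrable lborel torus F"
    unfolding set_integrable_def torus_def
    by (rule borel_integrable_compact) (auto intro: continuous_on_subset[OF cF])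
  then have "integral torus F = (\<integral>q. indicator torus q *\<^sub>R F q \<partial>lborel)"
    by (simp add: set_borel_integral_eq_integral(2)[symmetric] set_lebesgue_integral_def)
  also have "(\<lambda>q. indicator torus q *\<^sub>R F q) = (\<lambda>q. \<Prod>b\<in>Basis. g b (q \<bullet> b))"
  proof
    fix q :: "real^'d"
    have ind: "indicator torus q = (\<Prod>b\<in>Basis. indicator {0..2*pi} (q \<bullet> b) :: real)"
    proof -
      have vb: "\<And>b. b\<in>Basis \<Longrightarrow> (\<chi> i. 2*pi :: real^'d) \<bullet> b = 2*pi"
        by (auto simp: Basis_vec_def inner_axis)
      have "q \<in> torus \<longleftrightarrow> (\<forall>b\<in>Basis. q \<bullet> b \<in> {0..2*pi})"
        by (auto simp: torus_def mem_box vb)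
      then show ?thesis unfolding indicator_def
        by (auto intro!: prod.neutral simp: prod_zero_iff)
    qed
    have ex: "F q = (\<Prod>b\<in>Basis. exp (\<i> * complex_of_real ((realvec m \<bullet> b) * (q \<bullet> b))))"
      unfolding F_def ip_inner by (subst euclidean_inner) (simp add: exp_sum[symmetric] sum_distrib_left)
    show "indicator torus q *\<^sub>R F q = (\<Prod>b\<in>Basis. g b (q \<bullet> b))"
      unfolding ind ex g_def by (simp add: scaleR_conv_of_real prod.distrib of_real_prod)
  qed
  also have "(\<integral>q. (\<Prod>b\<in>Basis. g b (q \<bullet> b)) \<partial>lborel) = (\<Prod>b\<in>Basis. (\<integral>x. g b x \<partial>lborel))"
    by (rule integral_lborel_prod) (auto simp: g_def intro!: borel_integrable_compact continuous_intros)
  also have "\<dots> = 0"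
  proof -
    let ?b = "axis i 1 :: real^'d"
    have b: "?b \<in> Basis" by (auto simp: Basis_vec_def)
    have c: "realvec m \<bullet> ?b = of_int (m $ i)" by (simp add: inner_axis realvec_def)
    have si: "set_integrable lborel {0..2*pi} (\<lambda>y. exp (\<i> * complex_of_real (of_int (m $ i) * y)))"
      unfolding set_integrable_def by (auto intro!: borel_integrable_compact continuous_intros)
    have "(\<integral>x. g ?b x \<partial>lborel) = integral {0..2*pi} (\<lambda>y. exp ((\<i> * of_int (m $ i)) * complex_of_real y))"
      using set_borel_integral_eq_integral(2)[OF si] by (simp add: g_def c set_lebesgue_integral_def mult_ac)
    also have "\<dots> = (exp ((\<i> * of_int (m $ i)) * complex_of_real (2*pi)) - 1) / (\<i> * of_int (m $ i))"
      by (rule integral_exp) (use i in auto)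
    also have "exp ((\<i> * of_int (m $ i)) * complex_of_real (2*pi)) = 1"
      using exp_integer_2pi[of "of_int (m $ i)"] by (simp add: mult_ac)
    finally have "(\<integral>x. g ?b x \<partial>lborel) = 0" by simp
    then show ?thesis using b by (auto intro: prod_zero)
  qed
  finally show ?thesis using False by (simp add: F_def)
qed



lemma sum_list_count:
  fixes g :: "'a::finite \<Rightarrow> 'b::comm_ring_1"
  shows "sum_list (map g c) = (\<Sum>a\<in>UNIV. of_nat (count_list c a) * g a)"
proof (induction c)
  case Nil then show ?case by simp
next
  case (Cons x c)
  have "(\<Sum>a\<in>UNIV. of_nat (count_list (x # c) a) * g a) =
        (\<Sum>a\<in>UNIV. of_nat (count_list c a) * g a) + (\<Sum>a\<in>UNIV. (if x = a then g a else 0))"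
  proof -
    have "\<And>a. of_nat (count_list (x # c) a) * g a = of_nat (count_list c a) * g a + (if x = a then g a else 0)"
      by (simp add: algebra_simps)
    then show ?thesis by (simp add: sum.distrib)
  qed
  then show ?case using Cons by simp
qed

lemma sum_Plus_UNIV:
  fixes h :: "('e::finite + 'v::finite) \<Rightarrow> 'b::comm_monoid_add"
  shows "(\<Sum>a\<in>UNIV. h a) = (\<Sum>e\<in>UNIV. h (Inl e)) + (\<Sum>x\<in>UNIV. h (Inr x))"
  by (subst UNIV_Plus_UNIV[symmetric], subst sum.Plus) (auto simp: o_def)

lemma vec_sum_list_nth: "(sum_list xs) $ l = sum_list (map (\<lambda>x. x $ l) xs)"
  by (induction xs) auto

lemma sum_list_rotate_cycle:
  fixes h :: "'x \<Rightarrow> 'b::comm_monoid_add"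
  assumes "is_cycle s t c"
  shows "sum_list (map (\<lambda>a. h (t a)) c) = sum_list (map (\<lambda>a. h (s a)) c)"
proof -
  have ne: "c \<noteq> []" using assms by (simp add: is_cycle_def)
  have "map (\<lambda>a. h (t a)) c = rotate1 (map (\<lambda>a. h (s a)) c)"
  proof (rule nth_equalityI)
    fix i assume "i < length (map (\<lambda>a. h (t a)) c)"
    then have i: "i < length c" by simp
    have "Suc i mod length c < length c" using ne by simp
    then show "map (\<lambda>a. h (t a)) c ! i = rotate1 (map (\<lambda>a. h (s a)) c) ! i"
      using assms i by (simp add: nth_rotate1 is_cycle_def)
  qed simp
  also have "sum_list \<dots> = sum_list (map (\<lambda>a. h (s a)) c)"
    by (cases "map (\<lambda>a. h (s a)) c") (auto simp: add.commute)
  finally show ?thesis by simp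
qed

lemma even_sum_invol:
  fixes g :: "'a \<Rightarrow> int"
  assumes "finite S" "\<And>e. e \<in> S \<Longrightarrow> r e \<in> S" "\<And>e. r (r e) = e" "\<And>e. r e \<noteq> e"
    "\<And>e. g (r e) = g e"
  shows "even (sum g S)"
  using assms(1,2)
proof (induction "card S" arbitrary: S rule: less_induct)
  case less
  show ?case
  proof (cases "S = {}")
    case True then show ?thesis by simp
  next
    case False
    then obtain e where e: "e \<in> S" by auto
    define S' where "S' = S - {e, r e}"
    have re: "r e \<in> S" "r e \<noteq> e" using less e assms by auto
    have "sum g S = g e + sum g (S - {e})" using less e by (simp add: sum.remove)
    also have "sum g (S - {e}) = g (r e) + sum g S'"
      unfolding S'_def using less re by (subst sum.remove[of _ "r e"]) (auto simp: Diff_insert2[symmetric] insert_commute)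
    finally have eq: "sum g S = 2 * g e + sum g S'" using assms by simp
    have "card S' < card S" unfolding S'_def using less e re by (intro psubset_card_mono) auto
    moreover have "\<And>x. x \<in> S' \<Longrightarrow> r x \<in> S'" unfolding S'_def using less assms
      by auto (metis assms(3))+
    ultimately have "even (sum g S')" using less S'_def by auto
    then show ?thesis using eq by simp
  qed
qed



context
  fixes src tgt :: "'e::finite \<Rightarrow> 'v::finite" and rv :: "'e \<Rightarrow> 'e"
    and tau :: "'e \<Rightarrow> int^'d::finite" and al :: "'e \<Rightarrow> real"
  assumes graph: "periodic_graph src tgt rv tau al"
begin

lemma rv_rv[simp]: "rv (rv e) = e" and rv_neq: "rv e \<noteq> e" and src_rv[simp]: "src (rv e) = tgt e"
  and tgt_rv[simp]: "tgt (rv e) = src e" and tau_rv[simp]: "tau (rv e) = - tau e"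
  and al_rv[simp]: "al (rv e) = - al e"
  using graph by (auto simp: periodic_graph_def)

lemma mult_if01: "(a::'b::semiring_1) * (if P then 1 else 0) = (if P then a else 0)" by simp

lemma sum_rv: "(\<Sum>e\<in>UNIV. g (rv e)) = (\<Sum>e\<in>UNIV. g e)"
  by (rule sum.reindex_bij_witness[of UNIV rv rv]) auto

lemma count_Inl_sum:
  fixes h :: "'e \<Rightarrow> 'b::comm_ring_1"
  assumes "\<And>x. g (Inr x) = 0" "\<And>e. g (Inl e) = h e"
  shows "sum_list (map g (c :: ('e + 'v) list)) = (\<Sum>e\<in>UNIV. of_nat (count_list c (Inl e)) * h e)"
  by (simp add: sum_list_count sum_Plus_UNIV assms)

lemma cyc_tau_count: "(cyc_tau (mtau tau) (c :: ('e + 'v) list)) $ l = (\<Sum>e\<in>UNIV. int (count_list c (Inl e)) * tau e $ l)"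
  unfolding cyc_tau_def vec_sum_list_nth map_map o_def
  by (simp add: sum_list_count sum_Plus_UNIV mtau_def)

lemma cyc_al_count: "cyc_al (mal al) (c :: ('e + 'v) list) = (\<Sum>e\<in>UNIV. real (count_list c (Inl e)) * al e)"
  unfolding cyc_al_def
  by (simp add: sum_list_count sum_Plus_UNIV mal_def)

lemma Lt_chain: "(\<Sum>e\<in>UNIV. chain_of rv (c :: ('e + 'v) list) e * tau e $ l) = 2 * (cyc_tau (mtau tau) c) $ l"
proof -
  have "(\<Sum>e\<in>UNIV. chain_of rv c e * tau e $ l) =
     (\<Sum>e\<in>UNIV. int (count_list c (Inl e)) * tau e $ l) - (\<Sum>e\<in>UNIV. int (count_list c (Inl (rv e))) * tau e $ l)"
    by (simp add: chain_of_def algebra_simps sum_subtractf)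
  also have "(\<Sum>e\<in>UNIV. int (count_list c (Inl (rv e))) * tau e $ l) = (\<Sum>e\<in>UNIV. int (count_list c (Inl (rv (rv e)))) * tau (rv e) $ l)"
    by (rule sum_rv[symmetric])
  finally show ?thesis by (simp add: cyc_tau_count sum_negf)
qed

lemma al_chain: "ch_al al (chain_of rv (c :: ('e + 'v) list)) = cyc_al (mal al) c"
proof -
  have "(\<Sum>e\<in>UNIV. real_of_int (chain_of rv c e) * al e) =
     (\<Sum>e\<in>UNIV. real (count_list c (Inl e)) * al e) - (\<Sum>e\<in>UNIV. real (count_list c (Inl (rv e))) * al e)"
    by (simp add: chain_of_def algebra_simps sum_subtractf)
  also have "(\<Sum>e\<in>UNIV. real (count_list c (Inl (rv e))) * al e) = (\<Sum>e\<in>UNIV. real (count_list c (Inl (rv (rv e)))) * al (rv e))"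
    by (rule sum_rv[symmetric])
  finally show ?thesis by (simp add: ch_al_def cyc_al_count sum_negf)
qed

lemma even_Lt:
  assumes "\<And>e. f (rv e) = - f e"
  shows "even (\<Sum>e\<in>UNIV. f e * tau e $ l)"
  by (rule even_sum_invol[where r = rv]) (auto simp: rv_neq assms)

lemma chain_cycle:
  assumes cyc: "is_cycle (msrc src) (mtgt tgt) c"
  shows "chain_of rv c \<in> cycle_space src rv"
proof -
  have "(\<Sum>e\<in>{e. src e = x}. chain_of rv c e) = 0" for x
  proof -
    define h where "h = (\<lambda>y. if y = x then 1 else 0 :: int)"
    have r: "sum_list (map (\<lambda>a. h (mtgt tgt a)) c) = sum_list (map (\<lambda>a. h (msrc src a)) c)"
      by (rule sum_list_rotate_cycle[OF cyc])
    have s1: "sum_list (map (\<lambda>a. h (msrc src a)) c) = (\<Sum>e\<in>UNIV. int (count_list c (Inl e)) * h (src e)) + int (count_list c (Inr x))"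
      by (simp add: sum_list_count sum_Plus_UNIV msrc_def h_def mult_if01)
    have s2: "sum_list (map (\<lambda>a. h (mtgt tgt a)) c) = (\<Sum>e\<in>UNIV. int (count_list c (Inl e)) * h (tgt e)) + int (count_list c (Inr x))"
      by (simp add: sum_list_count sum_Plus_UNIV mtgt_def h_def mult_if01)
    have A: "(\<Sum>e\<in>{e. src e = x}. int (count_list c (Inl e))) = (\<Sum>e\<in>UNIV. int (count_list c (Inl e)) * h (src e))"
      by (simp add: h_def mult_if01 sum.If_cases)
    have B: "(\<Sum>e\<in>{e. src e = x}. int (count_list c (Inl (rv e)))) = (\<Sum>e\<in>UNIV. int (count_list c (Inl e)) * h (tgt e))"
    proof -
      have "(\<Sum>e\<in>{e. src e = x}. int (count_list c (Inl (rv e)))) = (\<Sum>e\<in>{e. tgt e = x}. int (count_list c (Inl e)))"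
        by (rule sum.reindex_bij_witness[of _ rv rv]) auto
      then show ?thesis by (simp add: h_def mult_if01 sum.If_cases)
    qed
    show ?thesis unfolding chain_of_def using r s1 s2 A B by (simp add: sum_subtractf)
  qed
  then show ?thesis by (auto simp: cycle_space_def chain_of_def)
qed

end



lemma lin_part:
  fixes A :: "'i \<Rightarrow> 'r::comm_ring_1"
  shows "(\<Sum>e\<in>E. (\<Sum>i\<in>I. A i * X i e) * w e) = (\<Sum>i\<in>I. A i * (\<Sum>e\<in>E. X i e * w e))"
proof -
  have "(\<Sum>e\<in>E. (\<Sum>i\<in>I. A i * X i e) * w e) = (\<Sum>e\<in>E. \<Sum>i\<in>I. A i * (X i e * w e))"
    by (simp add: sum_distrib_right mult.assoc)
  also have "\<dots> = (\<Sum>i\<in>I. \<Sum>e\<in>E. A i * (X i e * w e))" by (rule sum.swap)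
  also have "\<dots> = (\<Sum>i\<in>I. A i * (\<Sum>e\<in>E. X i e * w e))" by (simp add: sum_distrib_left)
  finally show ?thesis .
qed

lemma lin2:
  fixes A :: "'i \<Rightarrow> 'r::comm_ring_1"
  shows "(\<Sum>e\<in>E. ((\<Sum>i\<in>I. A i * X i e) + (\<Sum>j\<in>J. B j * Y j e)) * w e) =
    (\<Sum>i\<in>I. A i * (\<Sum>e\<in>E. X i e * w e)) + (\<Sum>j\<in>J. B j * (\<Sum>e\<in>E. Y j e * w e))"
  by (simp only: distrib_right sum.distrib lin_part)

context
  fixes src tgt :: "'e::finite \<Rightarrow> 'v::finite" and rv :: "'e \<Rightarrow> 'e"
    and tau :: "'e \<Rightarrow> int^'d::finite" and al :: "'e \<Rightarrow> real"
    and m :: nat and blat :: "'d \<Rightarrow> 'e \<Rightarrow> int" and bzero :: "nat \<Rightarrow> 'e \<Rightarrow> int"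
  assumes graph: "periodic_graph src tgt rv tau al"
    and basis: "cycle_basis src rv tau m blat bzero"
begin

lemma Lt_basis:
  assumes "f \<in> cycle_space src rv" "ch_tau tau f = v"
  shows "(\<Sum>e\<in>UNIV. f e * tau e $ l) = 2 * v $ l"
proof -
  have ev: "even (\<Sum>e\<in>UNIV. f e * tau e $ l)"
    using assms(1) by (intro even_Lt[OF graph]) (auto simp: cycle_space_def)
  have "(\<Sum>e\<in>UNIV. f e * tau e $ l) div 2 = v $ l"
    using assms(2) by (auto simp: ch_tau_def)
  then show ?thesis using ev by (metis dvd_mult_div_cancel)
qed

lemma alP_eq:
  assumes cyc: "is_cycle (msrc src) (mtgt tgt) (c :: ('e + 'v) list)"
  shows "alP rv al m blat bzero c = cyc_al (mal al) c + ip (cyc_tau (mtau tau) c) (k_o al blat)"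
proof -
  define f where "f = chain_of rv c"
  have fc: "f \<in> cycle_space src rv" unfolding f_def by (rule chain_cycle[OF graph cyc])
  define P where "P = (\<lambda>ab :: ('d \<Rightarrow> int) \<times> (nat \<Rightarrow> int). (\<forall>j\<ge>m. snd ab j = 0) \<and>
           f = (\<lambda>e. (\<Sum>i\<in>UNIV. fst ab i * blat i e) + (\<Sum>j<m. snd ab j * bzero j e)))"
  have "\<forall>f\<in>cycle_space src rv. \<exists>!ab :: ('d \<Rightarrow> int) \<times> (nat \<Rightarrow> int).
           (\<forall>j\<ge>m. snd ab j = 0) \<and>
           f = (\<lambda>e. (\<Sum>i\<in>UNIV. fst ab i * blat i e) + (\<Sum>j<m. snd ab j * bzero j e))"
    using basis unfolding cycle_basis_def by (elim conjE)
  then have "\<exists>!ab. P ab" using fc unfolding P_def by (rule bspec)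
  then have PT: "P (THE ab. P ab)" by (rule theI')
  define A where "A = fst (THE ab. P ab)"
  define B where "B = snd (THE ab. P ab)"
  have zc: "zero_coeffs m blat bzero f = B" unfolding zero_coeffs_def B_def P_def by simp
  have frep: "f = (\<lambda>e. (\<Sum>i\<in>UNIV. A i * blat i e) + (\<Sum>j<m. B j * bzero j e))"
    using PT unfolding P_def A_def B_def by blast
  have bl: "blat i \<in> cycle_space src rv" "ch_tau tau (blat i) = axis i 1" for i
    using basis by (auto simp: cycle_basis_def)
  have bz: "bzero j \<in> cycle_space src rv" "ch_tau tau (bzero j) = 0" if "j < m" for j
    using basis that by (auto simp: cycle_basis_def)
  have A_eq: "A l = cyc_tau (mtau tau) c $ l" for l
  proof -
    have "2 * cyc_tau (mtau tau) c $ l = (\<Sum>e\<in>UNIV. f e * tau e $ l)"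
      unfolding f_def by (rule Lt_chain[OF graph, symmetric])
    also have "\<dots> = (\<Sum>i\<in>UNIV. A i * (\<Sum>e\<in>UNIV. blat i e * tau e $ l)) + (\<Sum>j<m. B j * (\<Sum>e\<in>UNIV. bzero j e * tau e $ l))"
      by (subst frep) (rule lin2)
    also have "\<dots> = (\<Sum>i\<in>UNIV. A i * (2 * axis i 1 $ l)) + (\<Sum>j<m. B j * (2 * (0::int^'d) $ l))"
      using Lt_basis[OF bl] Lt_basis[OF bz] by simp
    also have "\<dots> = (\<Sum>i\<in>UNIV. if l = i then 2 * A i else 0)"
    proof -
      have "\<And>i. A i * (2 * axis i 1 $ l) = (if l = i then 2 * A i else 0)" by (simp add: axis_def)
      then show ?thesis by simp
    qed
    also have "\<dots> = 2 * A l" by simp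
    finally show ?thesis by simp
  qed
  have "cyc_al (mal al) c = ch_al al f" unfolding f_def by (rule al_chain[OF graph, symmetric])
  also have "\<dots> = (\<Sum>i\<in>UNIV. of_int (A i) * ch_al al (blat i)) + (\<Sum>j<m. of_int (B j) * ch_al al (bzero j))"
  proof -
    have "(\<Sum>e\<in>UNIV. real_of_int (f e) * al e) = (\<Sum>e\<in>UNIV. ((\<Sum>i\<in>UNIV. of_int (A i) * of_int (blat i e)) + (\<Sum>j<m. of_int (B j) * of_int (bzero j e))) * al e)"
      by (subst frep) (simp add: distrib_right)
    also have "\<dots> = (\<Sum>i\<in>UNIV. of_int (A i) * (\<Sum>e\<in>UNIV. of_int (blat i e) * al e)) + (\<Sum>j<m. of_int (B j) * (\<Sum>e\<in>UNIV. of_int (bzero j e) * al e))"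
      by (rule lin2)
    finally have X: "(\<Sum>e\<in>UNIV. real_of_int (f e) * al e) = (\<Sum>i\<in>UNIV. of_int (A i) * (\<Sum>e\<in>UNIV. of_int (blat i e) * al e)) + (\<Sum>j<m. of_int (B j) * (\<Sum>e\<in>UNIV. of_int (bzero j e) * al e))" .
    have two: "\<And>g. (\<Sum>e\<in>UNIV. real_of_int (g e) * al e) = 2 * ch_al al g" by (simp add: ch_al_def)
    have Y: "2 * ch_al al f = (\<Sum>i\<in>UNIV. of_int (A i) * (2 * ch_al al (blat i))) + (\<Sum>j<m. of_int (B j) * (2 * ch_al al (bzero j)))"
      using X by (simp only: two)
    have Z1: "(\<Sum>i\<in>UNIV. of_int (A i) * (2 * ch_al al (blat i))) = 2 * (\<Sum>i\<in>UNIV. of_int (A i) * ch_al al (blat i))"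
      by (simp add: sum_distrib_left mult_ac)
    have Z2: "(\<Sum>j<m. of_int (B j) * (2 * ch_al al (bzero j))) = 2 * (\<Sum>j<m. of_int (B j) * ch_al al (bzero j))"
      by (simp add: sum_distrib_left mult_ac)
    show ?thesis using Y Z1 Z2 by linarith
  qed
  also have "(\<Sum>j<m. of_int (B j) * ch_al al (bzero j)) = alP rv al m blat bzero c"
    by (simp add: alP_def zc[unfolded f_def])
  also have "(\<Sum>i\<in>UNIV. of_int (A i) * ch_al al (blat i)) = - ip (cyc_tau (mtau tau) c) (k_o al blat)"
    by (simp add: ip_def k_o_def A_eq sum_negf)
  finally show ?thesis by simp
qed

end



definition mrv :: "('e \<Rightarrow> 'e) \<Rightarrow> 'e + 'v \<Rightarrow> 'e + 'v" where
  "mrv rv a = (case a of Inl e \<Rightarrow> Inl (rv e) | Inr x \<Rightarrow> Inr x)"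

definition rvc :: "('e \<Rightarrow> 'e) \<Rightarrow> ('e + 'v) list \<Rightarrow> ('e + 'v) list" where
  "rvc rv c = rev (map (mrv rv) c)"

lemma walk_snoc: "walk s t x (c @ [a]) z \<longleftrightarrow> walk s t x c (s a) \<and> t a = z"
  by (induction c arbitrary: x) auto

lemma walk_hd: "walk s t x c y \<Longrightarrow> c \<noteq> [] \<Longrightarrow> s (hd c) = x"
  by (cases c) auto

lemma msrc_simps[simp]: "msrc src (Inl e) = src e" "msrc src (Inr x) = x"
  by (simp_all add: msrc_def)
lemma mtgt_simps[simp]: "mtgt tgt (Inl e) = tgt e" "mtgt tgt (Inr x) = x"
  by (simp_all add: mtgt_def)
lemma mtau_simps[simp]: "mtau tau (Inl e) = tau e" "mtau tau (Inr x) = 0"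
  by (simp_all add: mtau_def)
lemma mal_simps[simp]: "mal al (Inl e) = al e" "mal al (Inr x) = 0"
  by (simp_all add: mal_def)
lemma mrv_Inl[simp]: "mrv rv (Inl e) = Inl (rv e)" and mrv_Inr[simp]: "mrv rv (Inr x) = Inr x"
  by (simp_all add: mrv_def)

lemma ip_add: "ip (a + b) k = ip a k + ip b k"
  by (simp add: ip_def algebra_simps sum.distrib)
lemma ip_zero[simp]: "ip 0 k = 0"
  by (simp add: ip_def)
lemma ip_neg: "ip (- a) k = - ip a k"
  by (simp add: ip_def sum_negf)
lemma ip_add2: "ip a (k1 + k2) = ip a k1 + ip a k2"
  by (simp add: ip_def algebra_simps sum.distrib)

lemma sum_list_map_neg: "sum_list (map (\<lambda>x. - f x) xs) = - sum_list (map f xs :: 'b::ab_group_add list)"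
  by (induction xs) auto

definition fw :: "('e::finite \<Rightarrow> 'v) \<Rightarrow> ('e \<Rightarrow> int^'d::finite) \<Rightarrow> ('e \<Rightarrow> real) \<Rightarrow> ('v \<Rightarrow> real) \<Rightarrow> real^'d
   \<Rightarrow> 'e + 'v \<Rightarrow> complex" where
  "fw src tau al V k a = (case a of Inl e \<Rightarrow> exp (\<i> * complex_of_real (al e + ip (tau e) k))
      | Inr x \<Rightarrow> complex_of_real (vpot src V x))"

lemma fw_simps[simp]: "fw src tau al V k (Inl e) = exp (\<i> * complex_of_real (al e + ip (tau e) k))"
  "fw src tau al V k (Inr x) = complex_of_real (vpot src V x)"
  by (simp_all add: fw_def)

lemma fiberH_wmat: "fiberH src tgt tau al V k = wmat (msrc src) (mtgt tgt) (fw src tau al V k)"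
proof -
  have "(\<Sum>a\<in>{a. msrc src a = x \<and> mtgt tgt a = y}. fw src tau al V k a) =
     (\<Sum>e\<in>{e. src e = x \<and> tgt e = y}. exp (\<i> * complex_of_real (al e + ip (tau e) k)))
      + (if x = y then complex_of_real (V x - real (kappa src x)) else 0)" for x y
  proof -
    have "(\<Sum>a\<in>{a. msrc src a = x \<and> mtgt tgt a = y}. fw src tau al V k a) =
          (\<Sum>a\<in>UNIV. if msrc src a = x \<and> mtgt tgt a = y then fw src tau al V k a else 0)"
      by (simp add: sum.If_cases)
    also have "\<dots> = (\<Sum>e\<in>UNIV. if src e = x \<and> tgt e = y then exp (\<i> * complex_of_real (al e + ip (tau e) k)) else 0)
       + (\<Sum>z\<in>UNIV. if z = x \<and> z = y then complex_of_real (vpot src V z) else 0)"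
      by (simp add: sum_Plus_UNIV cong: if_cong)
    also have "\<dots> = (\<Sum>e\<in>{e. src e = x \<and> tgt e = y}. exp (\<i> * complex_of_real (al e + ip (tau e) k)))
      + (if x = y then complex_of_real (V x - real (kappa src x)) else 0)"
    proof -
      have "{z. z = x \<and> z = y} = (if x = y then {x} else {})" by auto
      then show ?thesis by (simp add: sum.If_cases vpot_def)
    qed
    finally show ?thesis .
  qed
  then show ?thesis by (simp add: fiberH_def wmat_def vec_eq_iff)
qed

lemma prod_fw: "prod_list (map (fw src tau al V k) c) =
   complex_of_real (omega src V c) * exp (\<i> * complex_of_real (cyc_al (mal al) c + ip (cyc_tau (mtau tau) c) k))"
proof (induction c)
  case Nil then show ?case by (simp add: omega_def cyc_al_def cyc_tau_def)
next
  case (Cons a c)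
  have o: "omega src V (a # c) = (case a of Inl e \<Rightarrow> 1 | Inr x \<Rightarrow> vpot src V x) * omega src V c"
    by (simp add: omega_def)
  have p: "cyc_al (mal al) (a # c) + ip (cyc_tau (mtau tau) (a # c)) k =
     (mal al a + ip (mtau tau a) k) + (cyc_al (mal al) c + ip (cyc_tau (mtau tau) c) k)"
    by (simp add: cyc_al_def cyc_tau_def ip_add)
  show ?case unfolding o p using Cons
    by (cases a) (simp_all add: exp_add distrib_left mult_ac)
qed

context
  fixes src tgt :: "'e::finite \<Rightarrow> 'v::finite" and rv :: "'e \<Rightarrow> 'e"
    and tau :: "'e \<Rightarrow> int^'d::finite" and al :: "'e \<Rightarrow> real"
  assumes graph: "periodic_graph src tgt rv tau al"
begin

lemma mrv_simps1[simp]: "msrc src (mrv rv a) = mtgt tgt a"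
  by (cases a) (simp_all add: src_rv[OF graph])
lemma mrv_simps2[simp]: "mtgt tgt (mrv rv a) = msrc src a"
  by (cases a) (simp_all add: tgt_rv[OF graph])
lemma mrv_simps3[simp]: "mrv rv (mrv rv (b :: 'e + 'v)) = b"
  by (cases b) (simp_all add: rv_rv[OF graph])

lemma walk_rvc: "walk (msrc src) (mtgt tgt) x c y \<Longrightarrow> walk (msrc src) (mtgt tgt) y (rvc rv c) x"
  by (induction c arbitrary: x) (auto simp: rvc_def walk_snoc)

lemma rvc_rvc[simp]: "rvc rv (rvc rv c) = (c :: ('e + 'v) list)"
  by (simp add: rvc_def rev_map map_map o_def)

lemma cycles_rvc: "c \<in> cycles (msrc src) (mtgt tgt) n \<Longrightarrow> rvc rv c \<in> cycles (msrc src) (mtgt tgt) n"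
proof -
  assume "c \<in> cycles (msrc src) (mtgt tgt) n"
  then have c: "length c = n" "c \<noteq> []" "walk (msrc src) (mtgt tgt) (msrc src (hd c)) c (msrc src (hd c))"
    by (auto simp: cycles_def is_cycle_walk)
  then have w: "walk (msrc src) (mtgt tgt) (msrc src (hd c)) (rvc rv c) (msrc src (hd c))"
    by (intro walk_rvc)
  have ne: "rvc rv c \<noteq> []" using c by (simp add: rvc_def)
  then have "msrc src (hd (rvc rv c)) = msrc src (hd c)" using walk_hd[OF w] by simp
  then show ?thesis using w ne c by (simp add: cycles_def is_cycle_walk rvc_def)
qed

lemma omega_rvc[simp]: "omega src V (rvc rv c) = omega src V c"
proof -
  have "(\<lambda>a. case a of Inl e \<Rightarrow> 1 | Inr x \<Rightarrow> vpot src V x) \<circ> mrv rv = (\<lambda>a. case a of Inl e \<Rightarrow> 1 | Inr x \<Rightarrow> vpot src V x)"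
    by (auto simp: mrv_def fun_eq_iff split: sum.splits)
  then show ?thesis by (simp only: omega_def rvc_def rev_map[symmetric] prod_list.rev map_map)
qed

lemma tau_rvc[simp]: "cyc_tau (mtau tau) (rvc rv (c :: ('e + 'v) list)) = - cyc_tau (mtau tau) c"
proof -
  have h: "mtau tau \<circ> mrv rv = (\<lambda>a. - mtau tau a)"
    by (auto simp: mrv_def mtau_def fun_eq_iff tau_rv[OF graph] split: sum.splits)
  then show ?thesis by (simp only: cyc_tau_def rvc_def rev_map[symmetric] sum_list.rev map_map sum_list_map_neg h)
qed

lemma al_rvc[simp]: "cyc_al (mal al) (rvc rv (c :: ('e + 'v) list)) = - cyc_al (mal al) c"
proof -
  have h: "mal al \<circ> mrv rv = (\<lambda>a. - mal al a)"
    by (auto simp: mrv_def mal_def fun_eq_iff al_rv[OF graph] split: sum.splits)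
  then show ?thesis by (simp only: cyc_al_def rvc_def rev_map[symmetric] sum_list.rev map_map sum_list_map_neg h)
qed

lemma sum_rvc:
  fixes S :: "('e + 'v) list set"
  assumes "\<And>c. c \<in> S \<Longrightarrow> rvc rv c \<in> S"
  shows "(\<Sum>c\<in>S. F c) = (\<Sum>c\<in>S. F (rvc rv c))"
  by (rule sum.reindex_bij_witness[of _ "rvc rv" "rvc rv"]) (auto intro: assms)

end



lemma trace_fiber:
  assumes "n \<ge> 1"
  shows "trace (mpow (fiberH src tgt tau al V k) n) =
    (\<Sum>c\<in>cycles (msrc src) (mtgt tgt) n. complex_of_real (omega src V c) *
        exp (\<i> * complex_of_real (cyc_al (mal al) c + ip (cyc_tau (mtau tau) c) k)))"
  using assms by (simp add: fiberH_wmat trace_wmat prod_fw)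

lemma cyc_al_zero[simp]: "cyc_al (mal (\<lambda>_. 0)) c = 0"
proof -
  have h: "mal (\<lambda>_. 0) = (\<lambda>_. 0)" by (auto simp: mal_def fun_eq_iff split: sum.splits)
  have "sum_list (map (\<lambda>_. 0::real) c) = 0" by (induction c) simp_all
  then show ?thesis unfolding cyc_al_def h .
qed

lemma exp_cis: "exp (\<i> * complex_of_real y) = cis y"
  by (simp add: cis_conv_exp)

lemma trig1:
  "complex_of_real w * (exp (\<i> * complex_of_real x) - exp (\<i> * complex_of_real (a + x))) +
   complex_of_real w * (exp (\<i> * complex_of_real (- x)) - exp (\<i> * complex_of_real (- (a + x))))
   = 2 * complex_of_real (w * (2 * sin (a / 2) * sin (a / 2 + x)))"
proof -
  have c: "cos x - cos (a + x) = 2 * sin (a / 2) * sin (a / 2 + x)"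
    using cos_add[of "a/2 + x" "a/2"] cos_diff[of "a/2 + x" "a/2"] by (simp add: algebra_simps)
  show ?thesis
  proof -
    have m: "cos (- a - x) = cos (a + x)" "sin (- a - x) = - sin (a + x)"
      using cos_minus[of "a+x"] sin_minus[of "a+x"] by simp_all
    have c': "cos x = cos (a + x) + 2 * sin (a / 2) * sin (x + a / 2)" using c by (simp add: add.commute)
    show ?thesis unfolding exp_cis using c' by (simp add: complex_eq_iff m algebra_simps)
  qed
qed

lemma trig2:
  "complex_of_real w * (1 - exp (\<i> * complex_of_real (- p))) + complex_of_real w * (1 - exp (\<i> * complex_of_real p))
   = 2 * complex_of_real (2 * (w * (sin (p / 2))\<^sup>2))"
proof -
  have c: "cos p = 1 - 2 * (sin (p / 2))\<^sup>2" using cos_double_sin[of "p/2"] by simp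
  show ?thesis unfolding exp_cis
    by (simp add: complex_eq_iff algebra_simps c)
qed

lemma finite_int_box: "finite {mm :: int^'d::finite. \<forall>i. \<bar>mm $ i\<bar> \<le> N}"
proof -
  have "{mm :: int^'d. \<forall>i. \<bar>mm $ i\<bar> \<le> N} \<subseteq> vec_lambda ` (Pi\<^sub>E UNIV (\<lambda>_. {-N..N}))"
  proof
    fix mm :: "int^'d" assume A: "mm \<in> {mm. \<forall>i. \<bar>mm $ i\<bar> \<le> N}"
    have "mm $ i \<in> {-N..N}" for i using A[simplified, rule_format, of i] by (simp add: abs_le_iff)
    then have "vec_nth mm \<in> Pi\<^sub>E UNIV (\<lambda>_. {-N..N})" by auto
    then show "mm \<in> vec_lambda ` (Pi\<^sub>E UNIV (\<lambda>_. {-N..N}))"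
      by (metis image_eqI vec_nth_inverse)
  qed
  then show ?thesis by (rule finite_subset) (intro finite_imageI finite_PiE, auto)
qed

lemma finite_norm_ball: "finite {mm :: int^'d::finite. norm (realvec mm) \<le> B}"
proof -
  have "{mm :: int^'d. norm (realvec mm) \<le> B} \<subseteq> {mm. \<forall>i. \<bar>mm $ i\<bar> \<le> \<lfloor>B\<rfloor>}"
  proof safe
    fix mm :: "int^'d" and i assume "norm (realvec mm) \<le> B"
    moreover have "\<bar>realvec mm $ i\<bar> \<le> norm (realvec mm)" by (rule component_le_norm_cart)
    ultimately have "\<bar>real_of_int (mm $ i)\<bar> \<le> B" by (simp add: realvec_def)
    then show "\<bar>mm $ i\<bar> \<le> \<lfloor>B\<rfloor>" by (simp add: le_floor_iff)
  qed
  then show ?thesis by (rule finite_subset) (rule finite_int_box)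
qed

lemma realvec_add: "realvec (a + b) = realvec a + realvec b"
  by (simp add: realvec_def vec_eq_iff)
lemma realvec_zero[simp]: "realvec 0 = 0"
  by (simp add: realvec_def vec_eq_iff)

lemma tau_plus_ge: "norm (realvec (tau e)) \<le> tau_plus tau"
  unfolding tau_plus_def by (rule Max_ge) auto

lemma tau_plus_nonneg: "0 \<le> tau_plus tau"
  using tau_plus_ge[of tau undefined] norm_ge_zero by (meson order.trans)

lemma norm_cyc_tau: "norm (realvec (cyc_tau (mtau tau) c)) \<le> real (length c) * tau_plus tau"
proof (induction c)
  case Nil then show ?case by (simp add: cyc_tau_def)
next
  case (Cons a c)
  have "norm (realvec (mtau tau a)) \<le> tau_plus tau"
    by (cases a) (simp_all add: tau_plus_ge tau_plus_nonneg)
  moreover have "realvec (cyc_tau (mtau tau) (a # c)) = realvec (mtau tau a) + realvec (cyc_tau (mtau tau) c)"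
    by (simp add: cyc_tau_def realvec_add)
  ultimately show ?case using Cons norm_triangle_ineq[of "realvec (mtau tau a)" "realvec (cyc_tau (mtau tau) c)"]
    by (simp add: algebra_simps)
qed



context
  fixes src tgt :: "'e::finite \<Rightarrow> 'v::finite" and rv :: "'e \<Rightarrow> 'e"
    and tau :: "'e \<Rightarrow> int^'d::finite" and al :: "'e \<Rightarrow> real" and V :: "'v \<Rightarrow> real"
    and m :: nat and blat :: "'d \<Rightarrow> 'e \<Rightarrow> int" and bzero :: "nat \<Rightarrow> 'e \<Rightarrow> int"
  assumes graph: "periodic_graph src tgt rv tau al"
    and basis: "cycle_basis src rv tau m blat bzero"
begin

lemma cyc_of_mem: "c \<in> cycles (msrc src) (mtgt tgt) n \<Longrightarrow> is_cycle (msrc src) (mtgt tgt) c"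
  by (simp add: cycles_def)

lemma alP_mem: "c \<in> cycles (msrc src) (mtgt tgt) n \<Longrightarrow>
   alP rv al m blat bzero c = cyc_al (mal al) c + ip (cyc_tau (mtau tau) c) (k_o al blat)"
  by (rule alP_eq[OF graph basis cyc_of_mem])

lemma D_eq:
  assumes n: "n \<ge> 1"
  shows "trace (mpow (fiberH src tgt tau (\<lambda>_. 0) V k) n - mpow (fiberH src tgt tau al V (k + k_o al blat)) n)
    = (\<Sum>c\<in>cycles (msrc src) (mtgt tgt) n. complex_of_real (omega src V c) *
        (exp (\<i> * complex_of_real (ip (cyc_tau (mtau tau) c) k)) -
         exp (\<i> * complex_of_real ((cyc_al (mal al) c + ip (cyc_tau (mtau tau) c) (k_o al blat)) + ip (cyc_tau (mtau tau) c) k))))"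
  unfolding trace_sub trace_fiber[OF n] cyc_al_zero
  by (simp add: sum_subtractf[symmetric] right_diff_distrib ip_add2 algebra_simps)

lemma stmt1:
  assumes n: "n \<ge> 1"
  shows "trace (mpow (fiberH src tgt tau (\<lambda>_. 0) V k) n - mpow (fiberH src tgt tau al V (k + k_o al blat)) n)
    = (\<Sum>c\<in>cycles (msrc src) (mtgt tgt) n. complex_of_real (omega src V c * S_fun rv al tau m blat bzero c k))"
proof -
  define Ct where "Ct = cycles (msrc src) (mtgt tgt) n"
  define T where "T c = cyc_tau (mtau tau) c" for c :: "('e + 'v) list"
  define ph where "ph c = cyc_al (mal al) c" for c :: "('e + 'v) list"
  define A where "A c = ph c + ip (T c) (k_o al blat)" for c
  define G where "G c = complex_of_real (omega src V c) *
        (exp (\<i> * complex_of_real (ip (T c) k)) - exp (\<i> * complex_of_real (A c + ip (T c) k)))" for c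
  have D: "trace (mpow (fiberH src tgt tau (\<lambda>_. 0) V k) n - mpow (fiberH src tgt tau al V (k + k_o al blat)) n)
     = (\<Sum>c\<in>Ct. G c)"
    unfolding D_eq[OF n] Ct_def G_def A_def T_def ph_def ..
  have inv: "\<And>c. c \<in> Ct \<Longrightarrow> rvc rv c \<in> Ct" unfolding Ct_def by (rule cycles_rvc[OF graph])
  have Gr: "G (rvc rv c) = complex_of_real (omega src V c) *
        (exp (\<i> * complex_of_real (- ip (T c) k)) - exp (\<i> * complex_of_real (- (A c + ip (T c) k))))" for c
    unfolding G_def A_def T_def ph_def
    by (simp add: omega_rvc[OF graph] tau_rvc[OF graph] al_rvc[OF graph] ip_neg)
  have "2 * (\<Sum>c\<in>Ct. G c) = (\<Sum>c\<in>Ct. G c) + (\<Sum>c\<in>Ct. G (rvc rv c))"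
    using sum_rvc[OF graph, of Ct G] inv by simp
  also have "\<dots> = (\<Sum>c\<in>Ct. G c + G (rvc rv c))" by (simp add: sum.distrib)
  also have "\<dots> = (\<Sum>c\<in>Ct. 2 * complex_of_real (omega src V c * S_fun rv al tau m blat bzero c k))"
  proof (rule sum.cong[OF refl])
    fix c assume c: "c \<in> Ct"
    have S: "S_fun rv al tau m blat bzero c k = 2 * sin (A c / 2) * sin (A c / 2 + ip (T c) k)"
      using alP_mem[OF c[unfolded Ct_def]] by (simp add: S_fun_def A_def T_def ph_def Let_def)
    show "G c + G (rvc rv c) = 2 * complex_of_real (omega src V c * S_fun rv al tau m blat bzero c k)"
      unfolding Gr unfolding G_def S using trig1[of "omega src V c" "ip (T c) k" "A c"] by (simp add: mult.assoc)
  qed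
  also have "\<dots> = 2 * (\<Sum>c\<in>Ct. complex_of_real (omega src V c * S_fun rv al tau m blat bzero c k))"
    by (simp add: sum_distrib_left)
  finally show ?thesis unfolding D Ct_def by simp
qed





end




lemma term1: "w * exp (\<i> * complex_of_real (0 + x)) - w * exp (\<i> * complex_of_real (p + x)) =
   w * (1 - exp (\<i> * complex_of_real p)) * exp (\<i> * complex_of_real x)"
proof -
  have "exp (\<i> * complex_of_real (p + x)) = exp (\<i> * complex_of_real p) * exp (\<i> * complex_of_real x)"
    by (simp add: distrib_left exp_add)
  then show ?thesis by (simp add: algebra_simps)
qed

lemma term2: "w * (exp (\<i> * complex_of_real (- x)) - exp (\<i> * complex_of_real (- a + - x))) =
   w * (1 - exp (- \<i> * complex_of_real a)) * exp (- \<i> * complex_of_real x)"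
proof -
  have "exp (\<i> * complex_of_real (- a + - x)) = exp (- \<i> * complex_of_real a) * exp (- \<i> * complex_of_real x)"
  proof -
    have "\<i> * complex_of_real (- a + - x) = - \<i> * complex_of_real a + - \<i> * complex_of_real x"
      by (simp add: algebra_simps)
    then show ?thesis by (simp only: exp_add)
  qed
  moreover have "exp (\<i> * complex_of_real (- x)) = exp (- \<i> * complex_of_real x)" by simp
  ultimately show ?thesis by (simp add: algebra_simps)
qed

lemma trig2':
  "complex_of_real w * (1 - exp (- \<i> * complex_of_real p)) + complex_of_real w * (1 - exp (- \<i> * complex_of_real (- p)))
   = 2 * complex_of_real (2 * (w * (sin (p / 2))\<^sup>2))"
  using trig2[of w p] by (simp add: add.commute)

context
  fixes src tgt :: "'e::finite \<Rightarrow> 'v::finite" and rv :: "'e \<Rightarrow> 'e"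
    and tau :: "'e \<Rightarrow> int^'d::finite" and al :: "'e \<Rightarrow> real" and V :: "'v \<Rightarrow> real"
    and m :: nat and blat :: "'d \<Rightarrow> 'e \<Rightarrow> int" and bzero :: "nat \<Rightarrow> 'e \<Rightarrow> int"
  assumes graph: "periodic_graph src tgt rv tau al"
    and basis: "cycle_basis src rv tau m blat bzero"
begin

lemma stmt2:
  assumes n: "n \<ge> 1"
  shows "trace (mpow (fiberH src tgt tau (\<lambda>_. 0) V k) n - mpow (fiberH src tgt tau al V (k + k_o al blat)) n)
    = (\<Sum>mm\<in>{mm :: int^'d. norm (realvec mm) \<le> real n * tau_plus tau}.
            t_coef src tgt rv al tau V m blat bzero n mm * exp (- \<i> * complex_of_real (ip mm k)))"
proof -
  define Ct where "Ct = cycles (msrc src) (mtgt tgt) n"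
  define M where "M = {mm :: int^'d. norm (realvec mm) \<le> real n * tau_plus tau}"
  define T where "T c = cyc_tau (mtau tau) c" for c :: "('e + 'v) list"
  define ph where "ph c = cyc_al (mal al) c" for c :: "('e + 'v) list"
  define A where "A c = ph c + ip (T c) (k_o al blat)" for c
  define G where "G c = complex_of_real (omega src V c) *
        (exp (\<i> * complex_of_real (ip (T c) k)) - exp (\<i> * complex_of_real (A c + ip (T c) k)))" for c
  define H where "H c = complex_of_real (omega src V c) * (1 - exp (- \<i> * complex_of_real (A c))) *
        exp (- \<i> * complex_of_real (ip (T c) k))" for c
  have D: "trace (mpow (fiberH src tgt tau (\<lambda>_. 0) V k) n - mpow (fiberH src tgt tau al V (k + k_o al blat)) n)
     = (\<Sum>c\<in>Ct. G c)"
    unfolding D_eq[OF graph basis n] Ct_def G_def A_def T_def ph_def ..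
  have fin: "finite Ct" unfolding Ct_def cycles_def by (rule finite_len)
  have inv: "\<And>c. c \<in> Ct \<Longrightarrow> rvc rv c \<in> Ct" unfolding Ct_def by (rule cycles_rvc[OF graph])
  have GH: "G (rvc rv c) = H c" for c
  proof -
    have "A (rvc rv c) = - A c" "T (rvc rv c) = - T c"
      unfolding A_def T_def ph_def by (simp_all add: tau_rvc[OF graph] al_rvc[OF graph] ip_neg)
    then show ?thesis unfolding G_def H_def
      by (simp only: omega_rvc[OF graph] ip_neg term2)
  qed
  have "(\<Sum>c\<in>Ct. G c) = (\<Sum>c\<in>Ct. H c)"
    using sum_rvc[OF graph, of Ct G] inv GH by simp
  also have "\<dots> = (\<Sum>mm\<in>M. \<Sum>c\<in>{c\<in>Ct. T c = mm}. H c)"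
  proof (rule sum.group[symmetric])
    show "finite M" unfolding M_def by (rule finite_norm_ball)
    show "T ` Ct \<subseteq> M"
      using norm_cyc_tau[of tau] unfolding M_def T_def Ct_def cycles_def by auto
  qed (rule fin)
  also have "\<dots> = (\<Sum>mm\<in>M. t_coef src tgt rv al tau V m blat bzero n mm * exp (- \<i> * complex_of_real (ip mm k)))"
  proof (rule sum.cong[OF refl])
    fix mm
    have "(\<Sum>c\<in>{c\<in>Ct. T c = mm}. H c) = (\<Sum>c\<in>{c\<in>Ct. T c = mm}.
       complex_of_real (omega src V c) * (1 - exp (- \<i> * complex_of_real (alP rv al m blat bzero c)))
         * exp (- \<i> * complex_of_real (ip mm k)))"
      by (rule sum.cong[OF refl]) (auto simp: H_def A_def ph_def T_def Ct_def alP_mem[OF graph basis])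
    then show "(\<Sum>c\<in>{c\<in>Ct. T c = mm}. H c) = t_coef src tgt rv al tau V m blat bzero n mm * exp (- \<i> * complex_of_real (ip mm k))"
      by (simp add: t_coef_def sum_distrib_right Ct_def T_def)
  qed
  finally show ?thesis unfolding D M_def .
qed

lemma trace_diff_q:
  assumes n: "n \<ge> 1"
  shows "trace (mpow (fiberH src tgt tau (\<lambda>_. 0) V q) n - mpow (fiberH src tgt tau al V q) n)
    = (\<Sum>c\<in>cycles (msrc src) (mtgt tgt) n. complex_of_real (omega src V c) *
        (1 - exp (\<i> * complex_of_real (cyc_al (mal al) c))) * exp (\<i> * complex_of_real (ip (cyc_tau (mtau tau) c) q)))"
  unfolding trace_sub trace_fiber[OF n] cyc_al_zero sum_subtractf[symmetric] term1 ..

lemma t0_eq: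
  "t_coef src tgt rv al tau V m blat bzero n 0 =
    (\<Sum>c\<in>{c\<in>cycles (msrc src) (mtgt tgt) n. cyc_tau (mtau tau) c = 0}.
      complex_of_real (omega src V c) * (1 - exp (- \<i> * complex_of_real (cyc_al (mal al) c))))"
  unfolding t_coef_def
proof (rule sum.cong[OF refl])
  fix c assume "c \<in> {c\<in>cycles (msrc src) (mtgt tgt) n. cyc_tau (mtau tau) c = 0}"
  then have "c \<in> cycles (msrc src) (mtgt tgt) n" "cyc_tau (mtau tau) c = 0" by auto
  then show "complex_of_real (omega src V c) * (1 - exp (- \<i> * complex_of_real (alP rv al m blat bzero c))) =
      complex_of_real (omega src V c) * (1 - exp (- \<i> * complex_of_real (cyc_al (mal al) c)))"
    using alP_mem[OF graph basis, of c n] by simp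
qed

lemma stmt4:
  "t_coef src tgt rv al tau V m blat bzero n 0 =
    complex_of_real (2 * (\<Sum>c\<in>{c\<in>cycles (msrc src) (mtgt tgt) n. cyc_tau (mtau tau) c = 0}.
                                   omega src V c * (sin (cyc_al (mal al) c / 2))\<^sup>2))"
proof -
  define S0 where "S0 = {c\<in>cycles (msrc src) (mtgt tgt) n. cyc_tau (mtau tau) c = 0}"
  define G where "G c = complex_of_real (omega src V c) * (1 - exp (- \<i> * complex_of_real (cyc_al (mal al) c)))" for c
  have inv: "\<And>c. c \<in> S0 \<Longrightarrow> rvc rv c \<in> S0" unfolding S0_def
    by (auto intro: cycles_rvc[OF graph] simp: tau_rvc[OF graph])
  have "2 * t_coef src tgt rv al tau V m blat bzero n 0 = (\<Sum>c\<in>S0. G c) + (\<Sum>c\<in>S0. G (rvc rv c))"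
    using sum_rvc[OF graph, of S0 G] inv unfolding t0_eq S0_def[symmetric] G_def[symmetric] by simp
  also have "\<dots> = (\<Sum>c\<in>S0. 2 * complex_of_real (2 * (omega src V c * (sin (cyc_al (mal al) c / 2))\<^sup>2)))"
    unfolding sum.distrib[symmetric]
    by (rule sum.cong[OF refl]) (simp only: G_def omega_rvc[OF graph] al_rvc[OF graph] trig2')
  also have "\<dots> = 2 * complex_of_real (2 * (\<Sum>c\<in>S0. omega src V c * (sin (cyc_al (mal al) c / 2))\<^sup>2))"
    by (simp add: of_real_sum sum_distrib_left)
  finally show ?thesis unfolding S0_def by simp
qed

lemma stmt3:
  assumes n: "n \<ge> 1"
  shows "(1 / (2 * pi) ^ CARD('d)) *\<^sub>R integral torus (\<lambda>q. trace (mpow (fiberH src tgt tau (\<lambda>_. 0) V q) n - mpow (fiberH src tgt tau al V q) n))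
       = t_coef src tgt rv al tau V m blat bzero n 0"
proof -
  define Ct where "Ct = cycles (msrc src) (mtgt tgt) n"
  define S0 where "S0 = {c\<in>Ct. cyc_tau (mtau tau) c = 0}"
  define K where "K c = complex_of_real (omega src V c) * (1 - exp (\<i> * complex_of_real (cyc_al (mal al) c)))" for c
  have fin: "finite Ct" unfolding Ct_def cycles_def by (rule finite_len)
  have "integral torus (\<lambda>q. trace (mpow (fiberH src tgt tau (\<lambda>_. 0) V q) n - mpow (fiberH src tgt tau al V q) n))
     = integral torus (\<lambda>q. \<Sum>c\<in>Ct. K c * exp (\<i> * complex_of_real (ip (cyc_tau (mtau tau) c) q)))"
    unfolding trace_diff_q[OF n] K_def Ct_def ..
  also have "\<dots> = (\<Sum>c\<in>Ct. K c * integral torus (\<lambda>q. exp (\<i> * complex_of_real (ip (cyc_tau (mtau tau) c) q))))"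
  proof (subst Henstock_Kurzweil_Integration.integral_sum[OF fin])
    fix c
    have cc: "continuous_on UNIV (\<lambda>q::real^'d. K c * exp (\<i> * complex_of_real (ip (cyc_tau (mtau tau) c) q)))"
      unfolding ip_def by (intro continuous_intros)
    show "(\<lambda>q. K c * exp (\<i> * complex_of_real (ip (cyc_tau (mtau tau) c) q))) integrable_on torus"
      unfolding torus_def by (rule integrable_continuous, rule continuous_on_subset[OF cc]) simp
  qed simp
  also have "\<dots> = (\<Sum>c\<in>Ct. if cyc_tau (mtau tau) c = 0 then K c * complex_of_real ((2*pi)^CARD('d)) else 0)"
    by (rule sum.cong[OF refl]) (simp add: torus_exp_integral)
  also have "\<dots> = (\<Sum>c\<in>S0. K c * complex_of_real ((2*pi)^CARD('d)))"
    unfolding S0_def by (rule sum.inter_filter[OF fin, symmetric])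
  also have "\<dots> = complex_of_real ((2*pi)^CARD('d)) * (\<Sum>c\<in>S0. K c)"
    by (simp only: sum_distrib_right mult.commute)
  finally have I: "integral torus (\<lambda>q. trace (mpow (fiberH src tgt tau (\<lambda>_. 0) V q) n - mpow (fiberH src tgt tau al V q) n))
     = complex_of_real ((2*pi)^CARD('d)) * (\<Sum>c\<in>S0. K c)" .
  have inv: "\<And>c. c \<in> S0 \<Longrightarrow> rvc rv c \<in> S0" unfolding S0_def Ct_def
    by (auto intro: cycles_rvc[OF graph] simp: tau_rvc[OF graph])
  have "(\<Sum>c\<in>S0. K c) = (\<Sum>c\<in>S0. K (rvc rv c))" using sum_rvc[OF graph, of S0 K] inv by simp
  also have "\<dots> = t_coef src tgt rv al tau V m blat bzero n 0"
    unfolding t0_eq S0_def Ct_def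
    by (rule sum.cong[OF refl]) (simp add: K_def omega_rvc[OF graph] al_rvc[OF graph])
  finally have "(\<Sum>c\<in>S0. K c) = t_coef src tgt rv al tau V m blat bzero n 0" .
  then show ?thesis unfolding I by (simp add: scaleR_conv_of_real)
qed


end




lemma mpow_1: "mpow A 1 = A"
  by (simp add: One_nat_def matrix_mul_rid)

lemma is_cycle_1: "is_cycle s t [a] \<longleftrightarrow> t a = s a"
  by (simp add: is_cycle_def)

lemma is_cycle_2: "is_cycle s t [a, b] \<longleftrightarrow> t a = s b \<and> t b = s a"
  by (auto simp: is_cycle_def All_less_Suc numeral_2_eq_2)

lemma cycles1: "cycles s t 1 = (\<lambda>a. [a]) ` {a. t a = s a}"
proof safe
  fix c assume "c \<in> cycles s t 1"
  then obtain a where "c = [a]" "t a = s a"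
    by (auto simp: cycles_def length_Suc_conv is_cycle_1)
  then show "c \<in> (\<lambda>a. [a]) ` {a. t a = s a}" by auto
qed (auto simp: cycles_def is_cycle_1)

lemma cycles2: "cycles s t 2 = (\<lambda>(a, b). [a, b]) ` {(a, b). t a = s b \<and> t b = s a}"
proof safe
  fix c assume "c \<in> cycles s t 2"
  then obtain a b where "c = [a, b]" "t a = s b" "t b = s a"
    by (auto simp: cycles_def length_Suc_conv is_cycle_2 numeral_2_eq_2)
  then show "c \<in> (\<lambda>(a, b). [a, b]) ` {(a, b). t a = s b \<and> t b = s a}" by auto
qed (auto simp: cycles_def is_cycle_2)

lemma cycles1_sum:
  fixes s t :: "'a::finite \<Rightarrow> 'v"
  shows "(\<Sum>c\<in>cycles s t 1. F c) = (\<Sum>a\<in>UNIV. if t a = s a then F [a] else 0)"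
proof -
  have "(\<Sum>c\<in>cycles s t 1. F c) = (\<Sum>a\<in>{a. t a = s a}. F [a])"
    unfolding cycles1 by (subst sum.reindex) (auto simp: inj_on_def)
  also have "\<dots> = (\<Sum>a\<in>UNIV. if t a = s a then F [a] else 0)"
    using sum.inter_filter[of UNIV "\<lambda>a. F [a]" "\<lambda>a. t a = s a"] by simp
  finally show ?thesis .
qed

lemma cycles2_sum:
  fixes s t :: "'a::finite \<Rightarrow> 'v"
  shows "(\<Sum>c\<in>cycles s t 2. F c) = (\<Sum>a\<in>UNIV. \<Sum>b\<in>UNIV. if t a = s b \<and> t b = s a then F [a, b] else 0)"
proof -
  have "(\<Sum>c\<in>cycles s t 2. F c) = (\<Sum>p\<in>{(a, b). t a = s b \<and> t b = s a}. F [fst p, snd p])"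
    unfolding cycles2 by (subst sum.reindex) (auto simp: inj_on_def intro!: sum.cong)
  also have "\<dots> = (\<Sum>p\<in>UNIV. if t (fst p) = s (snd p) \<and> t (snd p) = s (fst p) then F [fst p, snd p] else 0)"
    using sum.inter_filter[of UNIV "\<lambda>p. F [fst p, snd p]" "\<lambda>p. t (fst p) = s (snd p) \<and> t (snd p) = s (fst p)"]
    by (simp add: case_prod_beta')
  also have "\<dots> = (\<Sum>a\<in>UNIV. \<Sum>b\<in>UNIV. if t a = s b \<and> t b = s a then F [a, b] else 0)"
    by (subst sum.cartesian_product) (simp add: case_prod_beta UNIV_Times_UNIV[symmetric] del: UNIV_Times_UNIV)
  finally show ?thesis .
qed

lemma sdelta1: "(\<Sum>y\<in>(UNIV::'a::finite set). if p = y \<and> y = q then f y else 0) = (if p = q then f q else 0)"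
proof (cases "p = q")
  case True
  have "(\<Sum>y\<in>(UNIV::'a set). if p = y \<and> y = q then f y else 0) = (\<Sum>y\<in>UNIV. if y = q then f y else 0)"
    using True by (intro sum.cong) auto
  then show ?thesis using True by simp
next
  case False
  then show ?thesis by (auto intro!: sum.neutral)
qed

lemma sdelta2: "(\<Sum>y\<in>(UNIV::'a::finite set). if y = p \<and> q = y then f y else 0) = (if q = p then f p else 0)"
proof (cases "p = q")
  case True
  have "(\<Sum>y\<in>(UNIV::'a set). if y = p \<and> q = y then f y else 0) = (\<Sum>y\<in>UNIV. if y = p then f y else 0)"
    using True by (intro sum.cong) auto
  then show ?thesis using True by simp
next
  case False
  then show ?thesis by (auto intro!: sum.neutral)
qed

lemma Ct1_dec:
  fixes src tgt :: "'e::finite \<Rightarrow> 'v::finite"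
  shows "(\<Sum>c\<in>cycles (msrc src) (mtgt tgt) 1. F c) =
    (\<Sum>e\<in>UNIV. if tgt e = src e then F [Inl e] else 0) + (\<Sum>x\<in>UNIV. F [Inr x])"
  unfolding cycles1_sum by (simp add: sum_Plus_UNIV)

lemma C1_dec:
  fixes src tgt :: "'e::finite \<Rightarrow> 'v"
  shows "(\<Sum>c\<in>cycles src tgt 1. G c) = (\<Sum>e\<in>UNIV. if tgt e = src e then G [e] else 0)"
  by (rule cycles1_sum)

lemma C2_dec:
  fixes src tgt :: "'e::finite \<Rightarrow> 'v"
  shows "(\<Sum>c\<in>cycles src tgt 2. G c) = (\<Sum>e\<in>UNIV. \<Sum>e'\<in>UNIV. if tgt e = src e' \<and> tgt e' = src e then G [e, e'] else 0)"
  by (rule cycles2_sum)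

lemma Ct2_dec:
  fixes src tgt :: "'e::finite \<Rightarrow> 'v::finite"
  shows "(\<Sum>c\<in>cycles (msrc src) (mtgt tgt) 2. F c) =
    (\<Sum>e\<in>UNIV. \<Sum>e'\<in>UNIV. if tgt e = src e' \<and> tgt e' = src e then F [Inl e, Inl e'] else 0)
    + (\<Sum>e\<in>UNIV. if tgt e = src e then F [Inl e, Inr (src e)] else 0)
    + (\<Sum>e\<in>UNIV. if tgt e = src e then F [Inr (src e), Inl e] else 0)
    + (\<Sum>x\<in>UNIV. F [Inr x, Inr x])"
proof -
  have "(\<Sum>c\<in>cycles (msrc src) (mtgt tgt) 2. F c) =
     (\<Sum>e\<in>UNIV. (\<Sum>e'\<in>UNIV. if tgt e = src e' \<and> tgt e' = src e then F [Inl e, Inl e'] else 0)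
        + (\<Sum>y\<in>UNIV. if tgt e = y \<and> y = src e then F [Inl e, Inr y] else 0))
     + (\<Sum>x\<in>UNIV. (\<Sum>e\<in>UNIV. if x = src e \<and> tgt e = x then F [Inr x, Inl e] else 0)
        + (\<Sum>y\<in>UNIV. if x = y \<and> y = x then F [Inr x, Inr y] else 0))"
    by (simp add: cycles2_sum sum_Plus_UNIV)
  also have "(\<Sum>x\<in>UNIV. (\<Sum>e\<in>UNIV. if x = src e \<and> tgt e = x then F [Inr x, Inl e] else 0)
        + (\<Sum>y\<in>UNIV. if x = y \<and> y = x then F [Inr x, Inr y] else 0))
     = (\<Sum>e\<in>UNIV. if tgt e = src e then F [Inr (src e), Inl e] else 0) + (\<Sum>x\<in>UNIV. F [Inr x, Inr x])"
  proof -
    have "(\<Sum>x\<in>UNIV. \<Sum>e\<in>UNIV. if x = src e \<and> tgt e = x then F [Inr x, Inl e] else 0)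
        = (\<Sum>e\<in>UNIV. \<Sum>x\<in>UNIV. if x = src e \<and> tgt e = x then F [Inr x, Inl e] else 0)"
      by (rule sum.swap)
    also have "\<dots> = (\<Sum>e\<in>UNIV. if tgt e = src e then F [Inr (src e), Inl e] else 0)"
      by (simp only: sdelta2[where f = "\<lambda>x. F [Inr x, _]"])
    finally show ?thesis by (simp add: sum.distrib sdelta1[where f = "\<lambda>y. F [Inr _, Inr y]"])
  qed
  finally show ?thesis
    by (simp add: sum.distrib sdelta1[where f = "\<lambda>y. F [Inl _, Inr y]"] if_distrib[symmetric] algebra_simps)
qed

lemma fin_cycles: "finite (cycles (s :: 'a::finite \<Rightarrow> 'v) t n)"
  unfolding cycles_def by (rule finite_len)

definition Sx :: "('e::finite \<Rightarrow> real) \<Rightarrow> ('e \<Rightarrow> int^'d::finite) \<Rightarrow> ('d \<Rightarrow> 'e \<Rightarrow> int) \<Rightarrow> ('e + 'v) list \<Rightarrow> real^'d \<Rightarrow> real" where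
  "Sx al tau blat c k = (let a = cyc_al (mal al) c + ip (cyc_tau (mtau tau) c) (k_o al blat)
     in 2 * sin (a / 2) * sin (a / 2 + ip (cyc_tau (mtau tau) c) k))"

lemma Sx_simps[simp]:
  "Sx al tau blat [Inr x] k = 0"
  "Sx al tau blat [Inr x, Inr y] k = 0"
  "Sx al tau blat [Inl e, Inr x] k = Sx al tau blat [Inl e] k"
  "Sx al tau blat [Inr x, Inl e] k = Sx al tau blat [Inl e] k"
  by (simp_all add: Sx_def cyc_al_def cyc_tau_def Let_def)

lemma omega_simps[simp]:
  "omega src V [Inl e] = 1" "omega src V [Inr x] = vpot src V x"
  "omega src V [Inl e, Inl e'] = 1" "omega src V [Inl e, Inr x] = vpot src V x"
  "omega src V [Inr x, Inl e] = vpot src V x" "omega src V [Inr x, Inr y] = vpot src V x * vpot src V y"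
  by (simp_all add: omega_def)

lemma map_Inl_cycles:
  assumes "c \<in> cycles src tgt n"
  shows "map Inl c \<in> cycles (msrc src) (mtgt tgt) n"
  using assms by (auto simp: cycles_def is_cycle_def)

context
  fixes src tgt :: "'e::finite \<Rightarrow> 'v::finite" and rv :: "'e \<Rightarrow> 'e"
    and tau :: "'e \<Rightarrow> int^'d::finite" and al :: "'e \<Rightarrow> real" and V :: "'v \<Rightarrow> real"
    and m :: nat and blat :: "'d \<Rightarrow> 'e \<Rightarrow> int" and bzero :: "nat \<Rightarrow> 'e \<Rightarrow> int"
  assumes graph: "periodic_graph src tgt rv tau al"
    and basis: "cycle_basis src rv tau m blat bzero"
begin

lemma S_Sx: "c \<in> cycles (msrc src) (mtgt tgt) n \<Longrightarrow> S_fun rv al tau m blat bzero c k = Sx al tau blat c k"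
  using alP_mem[OF graph basis, of c n] by (simp add: S_fun_def Sx_def)

lemma S_map_Inl: "c \<in> cycles src tgt n \<Longrightarrow>
   S_fun rv al tau m blat bzero (map Inl c :: ('e + 'v) list) k = Sx al tau blat (map Inl c :: ('e + 'v) list) k"
  by (rule S_Sx[OF map_Inl_cycles])

lemma Ssum: "(\<Sum>c\<in>cycles (msrc src) (mtgt tgt) n. complex_of_real (omega src V c * S_fun rv al tau m blat bzero c k))
   = complex_of_real (\<Sum>c\<in>cycles (msrc src) (mtgt tgt) n. omega src V c * Sx al tau blat c k)"
  unfolding of_real_sum by (rule sum.cong[OF refl]) (simp add: S_Sx)

lemma stmt5:
  "trace (fiberH src tgt tau (\<lambda>_. 0) V k - fiberH src tgt tau al V (k + k_o al blat))
     = complex_of_real (\<Sum>c\<in>cycles src tgt 1. S_fun rv al tau m blat bzero (map Inl c :: ('e + 'v) list) k)"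
proof -
  have "trace (fiberH src tgt tau (\<lambda>_. 0) V k - fiberH src tgt tau al V (k + k_o al blat))
     = complex_of_real (\<Sum>c\<in>cycles (msrc src) (mtgt tgt) 1. omega src V c * Sx al tau blat c k)"
    using stmt1[OF graph basis, of 1 V k] Ssum[of k 1] by (simp add: mpow_1 del: of_real_mult)
  also have "(\<Sum>c\<in>cycles (msrc src) (mtgt tgt) 1. omega src V c * Sx al tau blat c k)
     = (\<Sum>e\<in>UNIV. if tgt e = src e then Sx al tau blat ([Inl e] :: ('e + 'v) list) k else 0)"
    unfolding Ct1_dec by (simp cong: if_cong)
  also have "\<dots> = (\<Sum>c\<in>cycles src tgt 1. S_fun rv al tau m blat bzero (map Inl c :: ('e + 'v) list) k)"
  proof -
    have "(\<Sum>c\<in>cycles src tgt 1. S_fun rv al tau m blat bzero (map Inl c :: ('e + 'v) list) k)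
       = (\<Sum>c\<in>cycles src tgt 1. Sx al tau blat (map Inl c :: ('e + 'v) list) k)"
      by (rule sum.cong[OF refl]) (simp only: S_map_Inl)
    then show ?thesis unfolding C1_dec by (simp cong: if_cong)
  qed
  finally show ?thesis .
qed

lemma stmt6:
  "trace (mpow (fiberH src tgt tau (\<lambda>_. 0) V k) 2 - mpow (fiberH src tgt tau al V (k + k_o al blat)) 2)
     = complex_of_real (2 * (\<Sum>c\<in>cycles src tgt 1. vpot src V (src (hd c)) * S_fun rv al tau m blat bzero (map Inl c :: ('e + 'v) list) k)
                          + (\<Sum>c\<in>cycles src tgt 2. S_fun rv al tau m blat bzero (map Inl c :: ('e + 'v) list) k))"
proof -
  define P where "P = (\<Sum>e\<in>UNIV. \<Sum>e'\<in>UNIV. if tgt e = src e' \<and> tgt e' = src e then Sx al tau blat ([Inl e, Inl e'] :: ('e + 'v) list) k else 0)"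
  define Q where "Q = (\<Sum>e\<in>UNIV. if tgt e = src e then vpot src V (src e) * Sx al tau blat ([Inl e] :: ('e + 'v) list) k else 0)"
  have "trace (mpow (fiberH src tgt tau (\<lambda>_. 0) V k) 2 - mpow (fiberH src tgt tau al V (k + k_o al blat)) 2)
     = complex_of_real (\<Sum>c\<in>cycles (msrc src) (mtgt tgt) 2. omega src V c * Sx al tau blat c k)"
    using stmt1[OF graph basis, of 2 V k] Ssum[of k 2] by (simp del: of_real_mult)
  also have "(\<Sum>c\<in>cycles (msrc src) (mtgt tgt) 2. omega src V c * Sx al tau blat c k) = P + Q + Q"
  proof -
    have 1: "(\<Sum>e\<in>UNIV. if tgt e = src e then omega src V [Inl e, Inr (src e)] * Sx al tau blat [Inl e, Inr (src e)] k else 0) = Q"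
      unfolding Q_def by (intro sum.cong refl) (simp cong: if_cong)
    have 2: "(\<Sum>e\<in>UNIV. if tgt e = src e then omega src V [Inr (src e), Inl e] * Sx al tau blat [Inr (src e), Inl e] k else 0) = Q"
      unfolding Q_def by (intro sum.cong refl) (simp cong: if_cong)
    have 3: "(\<Sum>x\<in>UNIV. omega src V [Inr x, Inr x] * Sx al tau blat [Inr x, Inr (x::'v)] k) = 0"
      by (intro sum.neutral ballI) simp
    have 4: "(\<Sum>e\<in>UNIV. \<Sum>e'\<in>UNIV. if tgt e = src e' \<and> tgt e' = src e then omega src V [Inl e, Inl e'] * Sx al tau blat ([Inl e, Inl e'] :: ('e + 'v) list) k else 0) = P"
      unfolding P_def by (intro sum.cong refl) (simp cong: if_cong)
    show ?thesis unfolding Ct2_dec 1 2 3 4 by simp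
  qed
  also have "P = (\<Sum>c\<in>cycles src tgt 2. S_fun rv al tau m blat bzero (map Inl c :: ('e + 'v) list) k)"
  proof -
    have "(\<Sum>c\<in>cycles src tgt 2. S_fun rv al tau m blat bzero (map Inl c :: ('e + 'v) list) k)
       = (\<Sum>c\<in>cycles src tgt 2. Sx al tau blat (map Inl c :: ('e + 'v) list) k)"
      by (rule sum.cong[OF refl]) (simp only: S_map_Inl)
    then show ?thesis unfolding C2_dec P_def by (simp cong: if_cong)
  qed
  also have "Q = (\<Sum>c\<in>cycles src tgt 1. vpot src V (src (hd c)) * S_fun rv al tau m blat bzero (map Inl c :: ('e + 'v) list) k)"
  proof -
    have "(\<Sum>c\<in>cycles src tgt 1. vpot src V (src (hd c)) * S_fun rv al tau m blat bzero (map Inl c :: ('e + 'v) list) k)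
       = (\<Sum>c\<in>cycles src tgt 1. vpot src V (src (hd c)) * Sx al tau blat (map Inl c :: ('e + 'v) list) k)"
      by (rule sum.cong[OF refl]) (simp only: S_map_Inl)
    then show ?thesis unfolding C1_dec Q_def by (simp cong: if_cong)
  qed
  finally show ?thesis by simp
qed

lemma filt: "(\<Sum>c\<in>{c\<in>cycles (msrc src) (mtgt tgt) n. cyc_tau (mtau tau) c = 0}. omega src V c * (sin (cyc_al (mal al) c / 2))\<^sup>2)
   = (\<Sum>c\<in>cycles (msrc src) (mtgt tgt) n. if cyc_tau (mtau tau) c = 0 then omega src V c * (sin (cyc_al (mal al) c / 2))\<^sup>2 else 0)"
  by (rule sum.inter_filter[OF fin_cycles])

lemma filtC: "(\<Sum>c\<in>{c\<in>cycles src tgt n. cyc_tau tau c = 0}. g c)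
   = (\<Sum>c\<in>cycles src tgt n. if cyc_tau tau c = 0 then g c else 0)"
  by (rule sum.inter_filter[OF fin_cycles])

lemma stmt7:
  "(1 / (2 * pi) ^ CARD('d)) *\<^sub>R integral torus (\<lambda>q. trace (fiberH src tgt tau (\<lambda>_. 0) V q - fiberH src tgt tau al V q))
       = complex_of_real (2 * (\<Sum>c\<in>{c\<in>cycles src tgt 1. cyc_tau tau c = 0}. (sin (cyc_al al c / 2))\<^sup>2))"
proof -
  have "(1 / (2 * pi) ^ CARD('d)) *\<^sub>R integral torus (\<lambda>q. trace (fiberH src tgt tau (\<lambda>_. 0) V q - fiberH src tgt tau al V q))
    = complex_of_real (2 * (\<Sum>c\<in>{c\<in>cycles (msrc src) (mtgt tgt) 1. cyc_tau (mtau tau) c = 0}.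
                                   omega src V c * (sin (cyc_al (mal al) c / 2))\<^sup>2))"
    using stmt3[OF graph basis, of 1 V] stmt4[OF graph basis, of V 1] by (simp add: mpow_1)
  also have "(\<Sum>c\<in>{c\<in>cycles (msrc src) (mtgt tgt) 1. cyc_tau (mtau tau) c = 0}.
                                   omega src V c * (sin (cyc_al (mal al) c / 2))\<^sup>2)
     = (\<Sum>c\<in>{c\<in>cycles src tgt 1. cyc_tau tau c = 0}. (sin (cyc_al al c / 2))\<^sup>2)"
    unfolding filt Ct1_dec unfolding filtC C1_dec by (simp add: cyc_tau_def cyc_al_def cong: if_cong)
  finally show ?thesis .
qed

lemma stmt9:
  "(1 / (2 * pi) ^ CARD('d)) *\<^sub>R integral torus (\<lambda>q. trace (mpow (fiberH src tgt tau (\<lambda>_. 0) V q) 2 - mpow (fiberH src tgt tau al V q) 2))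
       = complex_of_real (4 * (\<Sum>c\<in>{c\<in>cycles src tgt 1. cyc_tau tau c = 0}.
                                 vpot src V (src (hd c)) * (sin (cyc_al al c / 2))\<^sup>2)
                          + 2 * (\<Sum>c\<in>{c\<in>cycles src tgt 2. cyc_tau tau c = 0}. (sin (cyc_al al c / 2))\<^sup>2))"
proof -
  define P where "P = (\<Sum>e\<in>UNIV. \<Sum>e'\<in>UNIV. if tgt e = src e' \<and> tgt e' = src e then
       (if tau e + tau e' = 0 then (sin ((al e + al e') / 2))\<^sup>2 else 0) else 0)"
  define Q where "Q = (\<Sum>e\<in>UNIV. if tgt e = src e then (if tau e = 0 then vpot src V (src e) * (sin (al e / 2))\<^sup>2 else 0) else 0)"
  have "(1 / (2 * pi) ^ CARD('d)) *\<^sub>R integral torus (\<lambda>q. trace (mpow (fiberH src tgt tau (\<lambda>_. 0) V q) 2 - mpow (fiberH src tgt tau al V q) 2))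
    = complex_of_real (2 * (\<Sum>c\<in>{c\<in>cycles (msrc src) (mtgt tgt) 2. cyc_tau (mtau tau) c = 0}.
                                   omega src V c * (sin (cyc_al (mal al) c / 2))\<^sup>2))"
    using stmt3[OF graph basis, of 2 V] stmt4[OF graph basis, of V 2] by simp
  also have "(\<Sum>c\<in>{c\<in>cycles (msrc src) (mtgt tgt) 2. cyc_tau (mtau tau) c = 0}.
                                   omega src V c * (sin (cyc_al (mal al) c / 2))\<^sup>2) = P + Q + Q"
    unfolding filt Ct2_dec P_def Q_def by (simp add: cyc_tau_def cyc_al_def cong: if_cong)
  also have "P = (\<Sum>c\<in>{c\<in>cycles src tgt 2. cyc_tau tau c = 0}. (sin (cyc_al al c / 2))\<^sup>2)"
    unfolding filtC C2_dec P_def by (simp add: cyc_tau_def cyc_al_def cong: if_cong)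
  also have "Q = (\<Sum>c\<in>{c\<in>cycles src tgt 1. cyc_tau tau c = 0}. vpot src V (src (hd c)) * (sin (cyc_al al c / 2))\<^sup>2)"
    unfolding filtC C1_dec Q_def by (simp add: cyc_tau_def cyc_al_def cong: if_cong)
  finally show ?thesis by simp
qed

end


theorem corollary3p11:
  fixes src tgt :: "'e::finite \<Rightarrow> 'v::finite"
    and rv :: "'e \<Rightarrow> 'e"
    and tau :: "'e \<Rightarrow> int^'d::finite"
    and al :: "'e \<Rightarrow> real"
    and V :: "'v \<Rightarrow> real"
    and blat :: "'d \<Rightarrow> 'e \<Rightarrow> int"
    and bzero :: "nat \<Rightarrow> 'e \<Rightarrow> int"
    and n :: nat and k :: "real^'d"
  defines "m \<equiv> betti TYPE('e) TYPE('v) - CARD('d)"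
  defines "H \<equiv> fiberH src tgt tau al V"
  defines "H0 \<equiv> fiberH src tgt tau (\<lambda>_. 0) V"
  defines "S \<equiv> S_fun rv al tau m blat bzero"
  defines "Ct \<equiv> cycles (msrc src) (mtgt tgt)"
  defines "C \<equiv> cycles src tgt"
  defines "ko \<equiv> k_o al blat"
  defines "t \<equiv> t_coef src tgt rv al tau V m blat bzero"
  assumes graph: "periodic_graph src tgt rv tau al"
    and basis: "cycle_basis src rv tau m blat bzero"
    and n_pos: "n \<ge> 1"
  shows
    "trace (mpow (H0 k) n - mpow (H (k + ko)) n)
       = (\<Sum>c\<in>Ct n. complex_of_real (omega src V c * S c k))
   \<and> trace (mpow (H0 k) n - mpow (H (k + ko)) n)
       = (\<Sum>mm\<in>{mm :: int^'d. norm (realvec mm) \<le> real n * tau_plus tau}.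
            t n mm * exp (- \<i> * complex_of_real (ip mm k)))
   \<and> (1 / (2 * pi) ^ CARD('d)) *\<^sub>R integral torus (\<lambda>q. trace (mpow (H0 q) n - mpow (H q) n))
       = t n 0
   \<and> t n 0 = complex_of_real (2 * (\<Sum>c\<in>{c\<in>Ct n. cyc_tau (mtau tau) c = 0}.
                                   omega src V c * (sin (cyc_al (mal al) c / 2))\<^sup>2))
   \<and> trace (H0 k - H (k + ko)) = complex_of_real (\<Sum>c\<in>C 1. S (map Inl c) k)
   \<and> trace (mpow (H0 k) 2 - mpow (H (k + ko)) 2)
       = complex_of_real (2 * (\<Sum>c\<in>C 1. vpot src V (src (hd c)) * S (map Inl c) k)
                          + (\<Sum>c\<in>C 2. S (map Inl c) k))
   \<and> (1 / (2 * pi) ^ CARD('d)) *\<^sub>R integral torus (\<lambda>q. trace (H0 q - H q))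
       = complex_of_real (2 * (\<Sum>c\<in>{c\<in>C 1. cyc_tau tau c = 0}. (sin (cyc_al al c / 2))\<^sup>2))
   \<and> 2 * (\<Sum>c\<in>{c\<in>C 1. cyc_tau tau c = 0}. (sin (cyc_al al c / 2))\<^sup>2) \<ge> 0
   \<and> (1 / (2 * pi) ^ CARD('d)) *\<^sub>R integral torus (\<lambda>q. trace (mpow (H0 q) 2 - mpow (H q) 2))
       = complex_of_real (4 * (\<Sum>c\<in>{c\<in>C 1. cyc_tau tau c = 0}.
                                 vpot src V (src (hd c)) * (sin (cyc_al al c / 2))\<^sup>2)
                          + 2 * (\<Sum>c\<in>{c\<in>C 2. cyc_tau tau c = 0}. (sin (cyc_al al c / 2))\<^sup>2))"
proof -
  show ?thesis unfolding H_def H0_def S_def Ct_def C_def ko_def t_def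
    apply (intro conjI)
            apply (rule stmt1[OF graph basis n_pos])
           apply (rule stmt2[OF graph basis n_pos])
          apply (rule stmt3[OF graph basis n_pos])
         apply (rule stmt4[OF graph basis])
        apply (rule stmt5[OF graph basis])
       apply (rule stmt6[OF graph basis])
      apply (rule stmt7[OF graph basis])
     apply (simp add: sum_nonneg)
    apply (rule stmt9[OF graph basis])
    done
qed

end
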